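(* Let $\Omega\subset\mathbb{R}^m$ be open, bounded and connected, with boundary $\partial\Omega$ and unit normal $\boldsymbol{n}$. Let $p_0$ be a probability density on $\Omega$, let $\sigma(x,t)$ be a (diffusion) coefficient, and let $\alpha(x,t)$ be a design coefficient with $\inf_{x\in\Omega,t\ge0}\alpha(x,t)>0$ and $\sup_{x\in\Omega,t\ge0}\alpha(x,t)<\infty$. Let $(p_{\mathrm r},v_{\mathrm r})$ be a reference density and velocity field satisfying $$\partial_t p_{\mathrm r}=-\nabla\cdot(v_{\mathrm r}p_{\mathrm r})\ \text{in }\Omega\times(0,\infty),\qquad p_{\mathrm r}=p_0\ \text{on }\Omega\times\{0\},\qquad v_{\mathrm r}p_{\mathrm r}\cdot\boldsymbol{n}=0\ \text{on }\partial\Omega\times(0,\infty).$$ Consider the Fokker–Planck system $$\partial_t p=-\nabla\cdot(vp)+\Delta(\sigma p)\ \text{in }\Omega\times(0,\infty),\qquad p=p_0\ \text{on }\Omega\times\{0\},\qquad \boldsymbol{n}\cdot(\nabla(\sigma p)-vp)=0\ \text{on }\partial\Omega\times(0,\infty),$$ with the feedback law $$v=-\frac{\alpha(x,t)\nabla(p-p_{\mathrm r})-\nabla(\sigma p)-v_{\mathrm r}p_{\mathrm r}}{p}.$$ If the solution satisfies $p>0$, then the tracking error $\Phi:=p-p_{\mathrm r}$ satisfies $\|\Phi(\cdot,t)\|_{L^2(\Omega)}\to0$ exponentially as $t\to\infty$.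
   Context: $p(x,t)$ models the density of a robotic swarm whose members follow $dX_i=v(X_i,t)dt+\sqrt{2\sigma(X_i,t)}\,dB_t$; $\nabla\cdot$ denotes divergence and $\Delta$ the Laplacian in $x$. $L^2(\Omega)$ is the usual Lebesgue space with norm $\|f\|_{L^2(\Omega)}=(\int_\Omega|f|^2dx)^{1/2}$. *)

theory Defs
  imports "HOL-Analysis.Analysis"
begin

definition grad :: "('a::euclidean_space \<Rightarrow> real) \<Rightarrow> 'a \<Rightarrow> 'a" where
  "grad f x = (\<Sum>i\<in>Basis. frechet_derivative f (at x) i *\<^sub>R i)"

definition divg :: "('a::euclidean_space \<Rightarrow> 'a) \<Rightarrow> 'a \<Rightarrow> real" where
  "divg F x = (\<Sum>i\<in>Basis. frechet_derivative F (at x) i \<bullet> i)"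

definition lap :: "('a::euclidean_space \<Rightarrow> real) \<Rightarrow> 'a \<Rightarrow> real" where
  "lap f x = divg (grad f) x"

definition C1_on :: "('a::real_normed_vector \<Rightarrow> 'b::real_normed_vector) \<Rightarrow> 'a set \<Rightarrow> bool" where
  "C1_on f S \<longleftrightarrow> (\<forall>z\<in>S. f differentiable (at z)) \<and>
     (\<forall>h. continuous_on S (\<lambda>z. frechet_derivative f (at z) h))"

text \<open>A bounded C^1 domain given by a global C^1 defining function g:
  Omega = {g < 0}, with nonvanishing gradient on {g = 0}; unit outward normal grad g / |grad g|.\<close>

definition C1_domain :: "'a::euclidean_space set \<Rightarrow> ('a \<Rightarrow> real) \<Rightarrow> bool" where
  "C1_domain \<Omega> g \<longleftrightarrow> C1_on g UNIV \<and> \<Omega> = {x. g x < 0} \<and> (\<forall>x. g x = 0 \<longrightarrow> grad g x \<noteq> 0)"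

definition unit_normal :: "('a::euclidean_space \<Rightarrow> real) \<Rightarrow> 'a \<Rightarrow> 'a" where
  "unit_normal g x = grad g x /\<^sub>R norm (grad g x)"

definition unc :: "('a \<Rightarrow> real \<Rightarrow> 'b) \<Rightarrow> 'a \<times> real \<Rightarrow> 'b" where
  "unc f z = f (fst z) (snd z)"

definition L2norm :: "'a::euclidean_space set \<Rightarrow> ('a \<Rightarrow> real) \<Rightarrow> real" where
  "L2norm \<Omega> f = sqrt (integral \<Omega> (\<lambda>x. (f x)\<^sup>2))"

end

theory Submission
  imports Defs
begin

lemma line_deriv:
  fixes f :: "'a::real_normed_vector \<Rightarrow> real"
  assumes "(f has_derivative f') (at (x + s *\<^sub>R v))"
  shows "((\<lambda>s. f (x + s *\<^sub>R v)) has_real_derivative f' v) (at s)"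
proof -
  have "((\<lambda>s. x + s *\<^sub>R v) has_derivative (\<lambda>s. s *\<^sub>R v)) (at s)"
    by (auto intro!: derivative_eq_intros)
  from has_derivative_compose[OF this assms]
  have "((\<lambda>s. f (x + s *\<^sub>R v)) has_derivative (\<lambda>s'. f' (s' *\<^sub>R v))) (at s)" .
  moreover have "(\<lambda>s'. f' (s' *\<^sub>R v)) = (\<lambda>s'. f' v * s')"
    using linear.scaleR[OF has_derivative_linear[OF assms]] by (auto simp: mult.commute)
  ultimately show ?thesis by (simp add: has_field_derivative_def)
qed

lemma line_deriv0:
  fixes f :: "'a::real_normed_vector \<Rightarrow> real"
  assumes "(f has_derivative f') (at x)"
  shows "((\<lambda>s. f (x + s *\<^sub>R v)) has_real_derivative f' v) (at 0)"
  using line_deriv[of f f' x 0 v] assms by simp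

lemma DERIV_shift_line:
  fixes k :: "'a::real_vector \<Rightarrow> real"
  assumes "\<forall>x v. ((\<lambda>s. k (x + s *\<^sub>R v)) has_real_derivative kd x v) (at 0)"
  shows "((\<lambda>s. k (x + s *\<^sub>R v)) has_real_derivative kd (x + s0 *\<^sub>R v) v) (at s0)"
proof -
  have "((\<lambda>s. k (x + s0 *\<^sub>R v + s *\<^sub>R v)) has_real_derivative kd (x + s0 *\<^sub>R v) v) (at 0)"
    using assms by blast
  then have "((\<lambda>s. k (x + (s + s0) *\<^sub>R v)) has_real_derivative kd (x + s0 *\<^sub>R v) v) (at 0)"
  proof -
    have "(\<lambda>s. k (x + (s + s0) *\<^sub>R v)) = (\<lambda>s. k (x + s0 *\<^sub>R v + s *\<^sub>R v))"
      by (rule ext, rule arg_cong[where f=k]) (simp add: scaleR_add_left algebra_simps)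
    then show ?thesis using \<open>((\<lambda>s. k (x + s0 *\<^sub>R v + s *\<^sub>R v)) has_real_derivative _) _\<close> by simp
  qed
  then show ?thesis using DERIV_shift[of "\<lambda>s. k (x + s *\<^sub>R v)" _ 0 s0] by simp
qed

lemma core:
  fixes \<Omega> :: "'a::euclidean_space set" and u \<alpha> :: "'a \<Rightarrow> real \<Rightarrow> real"
    and Gu :: "'a \<Rightarrow> real \<Rightarrow> 'a" and \<alpha>d :: "'a \<Rightarrow> real \<Rightarrow> 'a \<Rightarrow> real"
    and k :: "'a \<Rightarrow> real" and kd kdd :: "'a \<Rightarrow> 'a \<Rightarrow> real" and G :: "'a \<Rightarrow> 'a"
  assumes op: "open \<Omega>" and bd: "bounded \<Omega>"
    and ucont: "continuous_on (closure \<Omega> \<times> {0..}) (unc u)"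
    and uder: "\<forall>x\<in>closure \<Omega>. \<forall>t>0. ((\<lambda>y. u y t) has_derivative (\<lambda>v. Gu x t \<bullet> v)) (at x)"
    and upde: "\<forall>x\<in>\<Omega>. \<forall>t>0. (\<lambda>y. \<alpha> y t *\<^sub>R Gu y t) differentiable (at x) \<and>
        ((\<lambda>s. u x s) has_real_derivative divg (\<lambda>y. \<alpha> y t *\<^sub>R Gu y t) x) (at t)"
    and ubc: "\<forall>x\<in>frontier \<Omega>. \<forall>t>0. Gu x t \<bullet> G x = 0"
    and gfront: "\<forall>x\<in>frontier \<Omega>. \<exists>d>0. \<forall>s. 0 < s \<and> s < d \<longrightarrow> x - s *\<^sub>R G x \<in> \<Omega>"
    and \<alpha>pos: "\<forall>x\<in>\<Omega>. \<forall>t>0. 0 < \<alpha> x t" and \<alpha>le: "\<forall>x\<in>\<Omega>. \<forall>t>0. \<alpha> x t \<le> B"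
    and \<alpha>der: "\<forall>x\<in>\<Omega>. \<forall>t>0. \<forall>e\<in>Basis. ((\<lambda>s. \<alpha> (x + s *\<^sub>R e) t) has_real_derivative \<alpha>d x t e) (at 0)"
    and \<alpha>dbd: "\<forall>x\<in>\<Omega>. \<forall>t\<in>{\<tau>..T}. \<forall>e\<in>Basis. \<bar>\<alpha>d x t e\<bar> \<le> Ma"
    and kcont: "continuous_on UNIV k"
    and kder: "\<forall>x v. ((\<lambda>s. k (x + s *\<^sub>R v)) has_real_derivative kd x v) (at 0)"
    and kdder: "\<forall>x. \<forall>e\<in>Basis. ((\<lambda>s. kd (x + s *\<^sub>R e) e) has_real_derivative kdd x e) (at 0)"
    and kbd: "\<forall>x. \<forall>e\<in>Basis. \<bar>kd x e\<bar> \<le> C1 \<and> \<bar>kdd x e\<bar> \<le> C2"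
    and kbc: "\<forall>x\<in>frontier \<Omega>. kd x (- G x) < 0"
    and tau: "0 < \<tau>" "\<tau> \<le> T"
    and init: "\<forall>x\<in>closure \<Omega>. u x \<tau> \<le> \<delta>"
  shows "\<forall>x\<in>closure \<Omega>. \<forall>t\<in>{\<tau>..T}. u x t \<le> \<delta>"
proof (rule ccontr)
  assume "\<not> ?thesis"
  then obtain x1 t1 where x1: "x1 \<in> closure \<Omega>" and t1: "t1 \<in> {\<tau>..T}" and ux1: "u x1 t1 > \<delta>"
    by force
  have cpt: "compact (closure \<Omega>)" using bd by (simp add: compact_closure)
  obtain K0 where K0: "\<forall>x\<in>closure \<Omega>. \<bar>k x\<bar> \<le> K0"
    using compact_imp_bounded[OF compact_continuous_image[OF continuous_on_subset[OF kcont] cpt]]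
    by (auto simp: bounded_iff)
  define M' where "M' = real DIM('a) * (\<bar>Ma\<bar> * \<bar>C1\<bar> + \<bar>B\<bar> * \<bar>C2\<bar>)"
  define M where "M = M' + 1"
  have M'nn: "M' \<ge> 0" by (simp add: M'_def)
  have Mpos: "M > 0" using M'nn by (simp add: M_def)
  have K0nn: "K0 \<ge> 0" using K0 x1 by force
  define \<eta> where "\<eta> = u x1 t1 - \<delta>"
  have eta: "\<eta> > 0" using ux1 by (simp add: \<eta>_def)
  define D where "D = 2*K0 + M*(T-\<tau>) + 1"
  have "M*(T-\<tau>) \<ge> 0" using Mpos tau by simp
  then have Dpos: "D > 0" using K0nn by (simp add: D_def)
  define \<epsilon> where "\<epsilon> = \<eta> / D"
  have eps: "\<epsilon> > 0" using eta Dpos by (simp add: \<epsilon>_def)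
  have "\<epsilon> * D = \<eta>" using Dpos by (simp add: \<epsilon>_def)
  then have epsD: "\<epsilon> * (2*K0 + M*(T-\<tau>)) < \<eta>" using eps by (simp add: D_def algebra_simps)
  define \<Psi> where "\<Psi> = (\<lambda>z::'a\<times>real. u (fst z) (snd z) - \<epsilon> * k (fst z) - \<epsilon> * M * (snd z - \<tau>))"
  have cS: "compact (closure \<Omega> \<times> {\<tau>..T})" by (intro compact_Times cpt compact_Icc)
  have sub: "closure \<Omega> \<times> {\<tau>..T} \<subseteq> closure \<Omega> \<times> {0..}" using tau by auto
  have c1: "continuous_on (closure \<Omega> \<times> {\<tau>..T}) (unc u)"
    using continuous_on_subset[OF ucont sub] .
  have c2: "continuous_on (closure \<Omega> \<times> {\<tau>..T}) (\<lambda>z::'a\<times>real. k (fst z))"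
    by (intro continuous_on_compose2[OF kcont] continuous_intros) auto
  have Psi_cont: "continuous_on (closure \<Omega> \<times> {\<tau>..T}) \<Psi>"
    unfolding \<Psi>_def using c1 c2 unfolding unc_def
    by (intro continuous_intros) auto
  obtain z0 where z0: "z0 \<in> closure \<Omega> \<times> {\<tau>..T}" and z0max: "\<forall>z\<in>closure \<Omega> \<times> {\<tau>..T}. \<Psi> z \<le> \<Psi> z0"
    using continuous_attains_sup[OF cS _ Psi_cont] x1 t1 by blast
  obtain x0 t0 where z0eq: "z0 = (x0,t0)" by (cases z0)
  have x0c: "x0 \<in> closure \<Omega>" and t0: "\<tau> \<le> t0" "t0 \<le> T" using z0 z0eq by auto
  have max: "\<And>x t. x \<in> closure \<Omega> \<Longrightarrow> \<tau> \<le> t \<Longrightarrow> t \<le> T \<Longrightarrow> \<Psi> (x,t) \<le> \<Psi> (x0,t0)"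
    using z0max z0eq by auto
  have "\<epsilon> * k x1 \<le> \<epsilon> * K0" using K0 x1 eps by (intro mult_left_mono) auto
  moreover have "\<epsilon> * M * (t1 - \<tau>) \<le> \<epsilon> * M * (T - \<tau>)" using t1 eps Mpos by (intro mult_left_mono) auto
  ultimately have high: "\<Psi> (x1,t1) > \<delta> + \<epsilon>*K0"
    using epsD by (simp add: \<Psi>_def \<eta>_def algebra_simps)
  have low: "\<And>x. x \<in> closure \<Omega> \<Longrightarrow> \<Psi> (x,\<tau>) \<le> \<delta> + \<epsilon>*K0"
  proof -
    fix x assume x: "x \<in> closure \<Omega>"
    have "- (\<epsilon> * k x) \<le> \<epsilon> * K0" using K0 x eps
      by (metis abs_le_D2 minus_mult_right mult_left_mono order_less_imp_le)
    moreover have "u x \<tau> \<le> \<delta>" using init x by blast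
    ultimately show "\<Psi> (x,\<tau>) \<le> \<delta> + \<epsilon>*K0" by (simp add: \<Psi>_def)
  qed
  have t0gt: "t0 > \<tau>"
  proof (rule ccontr)
    assume "\<not> t0 > \<tau>"
    then have "t0 = \<tau>" using t0 by simp
    then have "\<Psi> (x0,t0) \<le> \<delta> + \<epsilon>*K0" using low x0c by simp
    moreover have "\<Psi> (x1,t1) \<le> \<Psi> (x0,t0)" using max x1 t1 by auto
    ultimately show False using high by simp
  qed
  have t0pos: "t0 > 0" using t0gt tau by simp
  have "x0 \<in> \<Omega> \<or> x0 \<in> frontier \<Omega>" using x0c op by (auto simp: frontier_def interior_open)
  then show False
  proof
    assume x0: "x0 \<in> \<Omega>"
    define A where "A = (\<lambda>y. \<alpha> y t0 *\<^sub>R Gu y t0)"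
    have Adiff: "A differentiable (at x0)" and utder: "((\<lambda>s. u x0 s) has_real_derivative divg A x0) (at t0)"
      using upde x0 t0pos by (auto simp: A_def)
    define DA where "DA = frechet_derivative A (at x0)"
    have Ader: "(A has_derivative DA) (at x0)" using Adiff by (simp add: DA_def frechet_derivative_works)
    have divgA: "divg A x0 = (\<Sum>e\<in>Basis. DA e \<bullet> e)" by (simp add: divg_def DA_def)
    have tdpos: "divg A x0 \<ge> \<epsilon> * M"
    proof (rule ccontr)
      assume neg: "\<not> ?thesis"
      have "((\<lambda>s. \<Psi> (x0, s)) has_real_derivative divg A x0 - \<epsilon> * M) (at t0)"
        unfolding \<Psi>_def using utder by (auto intro!: derivative_eq_intros)
      from DERIV_neg_dec_left[OF this] neg obtain d where d: "d > 0"
        and dd: "\<forall>h>0. h < d \<longrightarrow> \<Psi> (x0,t0) < \<Psi> (x0,t0-h)" by auto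
      define h where "h = min d (t0-\<tau>) / 2"
      have h: "h > 0" "h < d" "h \<le> t0 - \<tau>" using d t0gt by (auto simp: h_def)
      have "\<Psi> (x0,t0-h) \<le> \<Psi> (x0,t0)" using max[OF x0c] h t0 by auto
      with dd h show False by force
    qed
    obtain r where r: "r > 0" "ball x0 r \<subseteq> \<Omega>" using op x0 open_contains_ball by blast
    have inball: "\<And>s e. e \<in> Basis \<Longrightarrow> \<bar>s\<bar> < r \<Longrightarrow> x0 + s *\<^sub>R e \<in> \<Omega>"
      using r by (auto simp: dist_norm)
    have sp: "DA e \<bullet> e \<le> \<epsilon> * (\<alpha>d x0 t0 e * kd x0 e + \<alpha> x0 t0 * kdd x0 e)" if e: "e \<in> Basis" for e
    proof (rule ccontr)
      assume neg: "\<not> ?thesis"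
      define f where "f = (\<lambda>s. \<Psi> (x0 + s *\<^sub>R e, t0))"
      define f' where "f' = (\<lambda>s. Gu (x0 + s *\<^sub>R e) t0 \<bullet> e - \<epsilon> * kd (x0 + s *\<^sub>R e) e)"
      have fder: "(f has_real_derivative f' s) (at s)" if s: "\<bar>s\<bar> < r" for s
      proof -
        have xs: "x0 + s *\<^sub>R e \<in> closure \<Omega>" using inball[OF e s] closure_subset by blast
        have "((\<lambda>s. u (x0 + s *\<^sub>R e) t0) has_real_derivative Gu (x0 + s *\<^sub>R e) t0 \<bullet> e) (at s)"
          using line_deriv[of "\<lambda>y. u y t0"] uder xs t0pos by blast
        moreover have "((\<lambda>s. k (x0 + s *\<^sub>R e)) has_real_derivative kd (x0 + s *\<^sub>R e) e) (at s)"
          using DERIV_shift_line[OF kder] .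
        ultimately show ?thesis unfolding f_def f'_def \<Psi>_def
          by (auto intro!: derivative_eq_intros)
      qed
      have f'0: "f' 0 = 0"
      proof (rule DERIV_local_max[OF fder[of 0]])
        show "\<bar>0::real\<bar> < r" using r by simp
        show "0 < r" using r by simp
        show "\<forall>y. \<bar>0 - y\<bar> < r \<longrightarrow> f y \<le> f 0"
        proof (intro allI impI)
          fix y :: real assume "\<bar>0 - y\<bar> < r"
          then have "x0 + y *\<^sub>R e \<in> closure \<Omega>" using inball[OF e, of y] closure_subset by auto
          then show "f y \<le> f 0" using max t0 by (simp add: f_def)
        qed
      qed
      define H where "H = (\<lambda>s. A (x0 + s *\<^sub>R e) \<bullet> e - \<epsilon> * (\<alpha> (x0 + s *\<^sub>R e) t0 * kd (x0 + s *\<^sub>R e) e))"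
      have h1: "((\<lambda>s. A (x0 + s *\<^sub>R e) \<bullet> e) has_real_derivative DA e \<bullet> e) (at 0)"
      proof -
        have "((\<lambda>y. A y \<bullet> e) has_derivative (\<lambda>v. DA v \<bullet> e)) (at x0)"
          using Ader by (auto intro!: derivative_eq_intros)
        from line_deriv0[OF this] show ?thesis .
      qed
      have Hder: "(H has_real_derivative (DA e \<bullet> e - \<epsilon> * (\<alpha>d x0 t0 e * kd x0 e + \<alpha> x0 t0 * kdd x0 e))) (at 0)"
        unfolding H_def
        using h1 \<alpha>der[rule_format, OF x0 t0pos e] kdder[rule_format, OF e, of x0]
        by (auto intro!: derivative_eq_intros simp: algebra_simps)
      have Hs: "H s = \<alpha> (x0 + s *\<^sub>R e) t0 * f' s" for s
        by (simp add: H_def f'_def A_def algebra_simps)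
      have H0: "H 0 = 0" using Hs[of 0] f'0 by simp
      from DERIV_pos_inc_right[OF Hder] neg obtain d where d: "d > 0"
        and dd: "\<forall>h>0. h < d \<longrightarrow> H 0 < H h" by auto
      define s0 where "s0 = min d r / 2"
      have s0: "0 < s0" "s0 < d" "s0 < r" using d r by (auto simp: s0_def)
      have pos: "f' s > 0" if "0 < s" "s \<le> s0" for s
      proof -
        have "H s > 0" using dd H0 that s0 by auto
        moreover have "\<alpha> (x0 + s *\<^sub>R e) t0 > 0" using \<alpha>pos inball[OF e, of s] that s0 t0pos by auto
        ultimately show ?thesis using Hs[of s] by (simp add: zero_less_mult_iff)
      qed
      obtain z where z: "0 < z" "z < s0" "f s0 - f 0 = (s0 - 0) * f' z"
        using MVT2[of 0 s0 f f'] s0 fder by force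
      have "s0 * f' z > 0" using z pos[of z] s0 by (simp add: mult_pos_pos)
      then have "f s0 > f 0" using z by simp
      moreover have "f s0 \<le> f 0"
        using max inball[OF e, of s0] closure_subset t0 s0 by (auto simp: f_def)
      ultimately show False by simp
    qed
    have "divg A x0 \<le> (\<Sum>e\<in>(Basis::'a set). \<epsilon> * (\<bar>Ma\<bar> * \<bar>C1\<bar> + \<bar>B\<bar> * \<bar>C2\<bar>))"
      unfolding divgA
    proof (rule sum_mono)
      fix e :: 'a assume e: "e \<in> Basis"
      have a: "\<alpha>d x0 t0 e * kd x0 e \<le> \<bar>Ma\<bar> * \<bar>C1\<bar>"
      proof -
        have "\<alpha>d x0 t0 e * kd x0 e \<le> \<bar>\<alpha>d x0 t0 e\<bar> * \<bar>kd x0 e\<bar>" by (simp add: abs_mult[symmetric])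
        also have "\<dots> \<le> \<bar>Ma\<bar> * \<bar>C1\<bar>"
        proof (intro mult_mono)
          have "\<bar>\<alpha>d x0 t0 e\<bar> \<le> Ma" using \<alpha>dbd x0 t0 t0gt e by auto
          then show "\<bar>\<alpha>d x0 t0 e\<bar> \<le> \<bar>Ma\<bar>" by linarith
          have "\<bar>kd x0 e\<bar> \<le> C1" using kbd e by auto
          then show "\<bar>kd x0 e\<bar> \<le> \<bar>C1\<bar>" by linarith
        qed auto
        finally show ?thesis .
      qed
      have b: "\<alpha> x0 t0 * kdd x0 e \<le> \<bar>B\<bar> * \<bar>C2\<bar>"
      proof -
        have "\<alpha> x0 t0 * kdd x0 e \<le> \<bar>\<alpha> x0 t0\<bar> * \<bar>kdd x0 e\<bar>" by (simp add: abs_mult[symmetric])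
        also have "\<dots> \<le> \<bar>B\<bar> * \<bar>C2\<bar>"
        proof (intro mult_mono)
          have "\<alpha> x0 t0 \<le> B" "0 < \<alpha> x0 t0" using \<alpha>le \<alpha>pos x0 t0pos by auto
          then show "\<bar>\<alpha> x0 t0\<bar> \<le> \<bar>B\<bar>" by linarith
          have "\<bar>kdd x0 e\<bar> \<le> C2" using kbd e by auto
          then show "\<bar>kdd x0 e\<bar> \<le> \<bar>C2\<bar>" by linarith
        qed auto
        finally show ?thesis .
      qed
      show "DA e \<bullet> e \<le> \<epsilon> * (\<bar>Ma\<bar> * \<bar>C1\<bar> + \<bar>B\<bar> * \<bar>C2\<bar>)"
        using sp[OF e] a b eps
        by (smt (verit, ccfv_SIG) distrib_left mult_left_mono)
    qed
    also have "\<dots> = \<epsilon> * M'" by (simp add: M'_def)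
    finally have "divg A x0 \<le> \<epsilon> * M'" .
    with tdpos have "\<epsilon> * M \<le> \<epsilon> * M'" by simp
    then have "M \<le> M'" using eps by simp
    then show False by (simp add: M_def)
  next
    assume x0: "x0 \<in> frontier \<Omega>"
    have x0c': "x0 \<in> closure \<Omega>" using x0 by (simp add: frontier_def)
    obtain d1 where d1: "d1 > 0" "\<forall>s. 0 < s \<and> s < d1 \<longrightarrow> x0 - s *\<^sub>R G x0 \<in> \<Omega>"
      using gfront x0 by blast
    define f where "f = (\<lambda>s. \<Psi> (x0 + s *\<^sub>R (- G x0), t0))"
    have "((\<lambda>s. u (x0 + s *\<^sub>R (- G x0)) t0) has_real_derivative Gu x0 t0 \<bullet> (- G x0)) (at 0)"
      using line_deriv0[of "\<lambda>y. u y t0"] uder x0c' t0pos by blast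
    moreover have "((\<lambda>s. k (x0 + s *\<^sub>R (- G x0))) has_real_derivative kd x0 (- G x0)) (at 0)"
      using kder by blast
    ultimately have "(f has_real_derivative (Gu x0 t0 \<bullet> (- G x0) - \<epsilon> * kd x0 (- G x0))) (at 0)"
      unfolding f_def \<Psi>_def by (auto intro!: derivative_eq_intros)
    then have fd: "(f has_real_derivative (- \<epsilon> * kd x0 (- G x0))) (at 0)"
      using ubc x0 t0pos by simp
    have "- \<epsilon> * kd x0 (- G x0) > 0" using kbc x0 eps by (simp add: mult_pos_neg)
    from DERIV_pos_inc_right[OF fd this] obtain d2 where d2: "d2 > 0"
      and dd: "\<forall>h>0. h < d2 \<longrightarrow> f 0 < f h" by auto
    define s where "s = min d1 d2 / 2"
    have s: "0 < s" "s < d1" "s < d2" using d1 d2 by (auto simp: s_def)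
    have "x0 + s *\<^sub>R (- G x0) \<in> \<Omega>" using d1 s by simp
    then have "f s \<le> f 0" using max closure_subset t0 by (auto simp: f_def)
    with dd s show False by force
  qed
qed


lemma maxpow_deriv:
  fixes n :: nat and w :: real
  assumes n: "n \<ge> 1"
  shows "((\<lambda>w::real. (max 0 w) ^ (Suc n)) has_real_derivative real (Suc n) * (max 0 w) ^ n) (at w)"
proof (cases "w = 0")
  case True
  have "((\<lambda>y::real. ((max 0 y) ^ Suc n - (max 0 0) ^ Suc n) / (y - 0)) \<longlongrightarrow> 0) (at 0)"
  proof -
    have "((\<lambda>y::real. max 0 y) \<longlongrightarrow> max 0 0) (at 0)"
      by (intro tendsto_intros)
    from tendsto_power[OF this, of n]
    have "((\<lambda>y::real. (max 0 y) ^ n) \<longlongrightarrow> 0) (at 0)" using n by (simp add: power_0_left)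
    moreover have "\<forall>\<^sub>F y in at (0::real). (max 0 y) ^ n = ((max 0 y) ^ Suc n - (max 0 0) ^ Suc n) / (y - 0)"
      using n by (auto simp: eventually_at_filter max_def)
    ultimately show ?thesis using Lim_transform_eventually by fastforce
  qed
  moreover have "n \<noteq> 0" using n by simp
  ultimately show ?thesis using True by (simp add: has_field_derivative_iff power_0_left)
next
  case False
  show ?thesis
  proof (cases "w > 0")
    case True
    have "((\<lambda>w::real. w ^ (Suc n)) has_real_derivative real (Suc n) * w ^ n) (at w)"
      using DERIV_pow[of "Suc n" w] by simp
    then have "((\<lambda>w::real. (max 0 w) ^ (Suc n)) has_real_derivative real (Suc n) * w ^ n) (at w)"
      by (rule has_field_derivative_transform_within_open[where S="{0<..}"]) (use True in auto)
    then show ?thesis using True by simp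
  next
    case False
    with \<open>w \<noteq> 0\<close> have w: "w < 0" by simp
    have "((\<lambda>w::real. 0) has_real_derivative 0) (at w)"
      by (auto intro!: derivative_eq_intros)
    then have "((\<lambda>w::real. (max 0 w) ^ (Suc n)) has_real_derivative 0) (at w)"
      by (rule has_field_derivative_transform_within_open[where S="{..<0}"]) (use w in auto)
    moreover have "n \<noteq> 0" using n by simp
    ultimately show ?thesis using w by (simp add: power_0_left)
  qed
qed

definition Pf :: "real \<Rightarrow> 'a::euclidean_space \<Rightarrow> real" where
  "Pf h y = max 0 (h\<^sup>2 - y \<bullet> y)"
definition phi :: "real \<Rightarrow> 'a::euclidean_space \<Rightarrow> real" where
  "phi h y = (Pf h y) ^ 3"
definition dphi :: "real \<Rightarrow> 'a::euclidean_space \<Rightarrow> 'a \<Rightarrow> real" where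
  "dphi h y v = - 6 * (Pf h y)\<^sup>2 * (y \<bullet> v)"
definition d2phi :: "real \<Rightarrow> 'a::euclidean_space \<Rightarrow> 'a \<Rightarrow> real" where
  "d2phi h y v = 24 * Pf h y * (y \<bullet> v)\<^sup>2 - 6 * (Pf h y)\<^sup>2 * (v \<bullet> v)"

lemma phi_line:
  "((\<lambda>s. phi h (y + s *\<^sub>R v)) has_real_derivative dphi h (y + s *\<^sub>R v) v) (at s)"
proof -
  have w: "((\<lambda>s. h\<^sup>2 - (y + s *\<^sub>R v) \<bullet> (y + s *\<^sub>R v)) has_real_derivative - 2 * ((y + s *\<^sub>R v) \<bullet> v)) (at s)"
    by (auto intro!: derivative_eq_intros simp: algebra_simps inner_commute)
  have m: "((\<lambda>w::real. (max 0 w) ^ 3) has_real_derivative 3 * (max 0 w) ^ 2) (at w)" for w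
    using maxpow_deriv[where n=2 and w=w] by (simp add: numeral_eq_Suc)
  from DERIV_chain2[OF m w] show ?thesis
    by (simp add: phi_def dphi_def Pf_def power2_eq_square algebra_simps)
qed

lemma dphi_line:
  "((\<lambda>s. dphi h (y + s *\<^sub>R v) v) has_real_derivative d2phi h (y + s *\<^sub>R v) v) (at s)"
proof -
  have w: "((\<lambda>s. h\<^sup>2 - (y + s *\<^sub>R v) \<bullet> (y + s *\<^sub>R v)) has_real_derivative - 2 * ((y + s *\<^sub>R v) \<bullet> v)) (at s)"
    by (auto intro!: derivative_eq_intros simp: algebra_simps inner_commute)
  have m: "((\<lambda>w::real. (max 0 w) ^ 2) has_real_derivative 2 * (max 0 w)) (at w)" for w
    using maxpow_deriv[where n=1 and w=w] by (simp add: numeral_eq_Suc)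
  have P2: "((\<lambda>s. (Pf h (y + s *\<^sub>R v))\<^sup>2) has_real_derivative 2 * Pf h (y + s *\<^sub>R v) * (- 2 * ((y + s *\<^sub>R v) \<bullet> v))) (at s)"
    using DERIV_chain2[OF m w] by (simp add: Pf_def)
  have eqf: "(\<lambda>s. (y + s *\<^sub>R v) \<bullet> v) = (\<lambda>s. y \<bullet> v + s * (v \<bullet> v))"
    by (auto simp: inner_add_left)
  have "((\<lambda>s. y \<bullet> v + s * (v \<bullet> v)) has_real_derivative v \<bullet> v) (at s)"
    by (auto intro!: derivative_eq_intros)
  then have l: "((\<lambda>s. (y + s *\<^sub>R v) \<bullet> v) has_real_derivative v \<bullet> v) (at s)"
    by (simp add: eqf)
  have "((\<lambda>s. - 6 * (Pf h (y + s *\<^sub>R v))\<^sup>2 * ((y + s *\<^sub>R v) \<bullet> v)) has_real_derivative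
      - 6 * (Pf h (y + s *\<^sub>R v))\<^sup>2 * (v \<bullet> v) +
      - 6 * (2 * Pf h (y + s *\<^sub>R v) * (- 2 * ((y + s *\<^sub>R v) \<bullet> v))) * ((y + s *\<^sub>R v) \<bullet> v)) (at s)"
    by (rule DERIV_mult'[OF DERIV_cmult[OF P2, of "-6"] l])
  then show ?thesis unfolding dphi_def d2phi_def
    by (rule DERIV_cong) (simp add: power2_eq_square algebra_simps)
qed

lemma Pf_nonneg: "Pf h y \<ge> 0" by (simp add: Pf_def)
lemma Pf_le: "Pf h y \<le> h\<^sup>2" by (simp add: Pf_def)
lemma Pf_zero: "h \<ge> 0 \<Longrightarrow> norm y \<ge> h \<Longrightarrow> Pf h y = 0"
proof -
  assume h: "h \<ge> 0" "norm y \<ge> h"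
  have "h\<^sup>2 \<le> (norm y)\<^sup>2" using h by (simp add: power_mono)
  then show ?thesis by (simp add: Pf_def power2_norm_eq_inner)
qed
lemma phi_nonneg: "phi h y \<ge> 0" by (simp add: phi_def Pf_nonneg)

lemma cont_Pf: "continuous_on S (\<lambda>y. Pf h (f y))" if "continuous_on S f" for f :: "'b::topological_space \<Rightarrow> 'a::euclidean_space"
  unfolding Pf_def using that by (intro continuous_intros)

lemma dphi_bound:
  assumes h: "h \<ge> 0" and e: "norm e = 1"
  shows "\<bar>dphi h y e\<bar> \<le> 6 * h ^ 5"
proof (cases "norm y \<ge> h")
  case True then show ?thesis using Pf_zero[OF h True] h by (simp add: dphi_def)
next
  case False
  have "\<bar>y \<bullet> e\<bar> \<le> norm y * norm e" by (rule Cauchy_Schwarz_ineq2)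
  then have ye: "\<bar>y \<bullet> e\<bar> \<le> h" using False e by simp
  have P0: "(Pf h y)\<^sup>2 \<le> (h\<^sup>2)\<^sup>2" by (rule power_mono[OF Pf_le Pf_nonneg])
  have hh: "(h\<^sup>2)\<^sup>2 = h^4" by (subst power_mult[symmetric]) simp
  have P: "(Pf h y)\<^sup>2 \<le> h^4" using P0 hh by simp
  have "\<bar>dphi h y e\<bar> = 6 * (Pf h y)\<^sup>2 * \<bar>y \<bullet> e\<bar>" by (simp add: dphi_def abs_mult)
  also have "\<dots> \<le> 6 * h^4 * h" using P ye by (intro mult_mono) auto
  finally show ?thesis by (simp add: eval_nat_numeral algebra_simps)
qed

lemma d2phi_bound:
  assumes h: "h \<ge> 0" and e: "norm e = 1"
  shows "\<bar>d2phi h y e\<bar> \<le> 30 * h ^ 4"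
proof (cases "norm y \<ge> h")
  case True then show ?thesis using Pf_zero[OF h True] h by (simp add: d2phi_def)
next
  case False
  have "\<bar>y \<bullet> e\<bar> \<le> norm y * norm e" by (rule Cauchy_Schwarz_ineq2)
  then have ye: "\<bar>y \<bullet> e\<bar> \<le> h" using False e by simp
  then have ye2: "(y \<bullet> e)\<^sup>2 \<le> h\<^sup>2" by (metis abs_le_square_iff abs_of_nonneg h)
  have ee: "e \<bullet> e = 1" using e by (simp add: norm_eq_1)
  have P0: "(Pf h y)\<^sup>2 \<le> (h\<^sup>2)\<^sup>2" by (rule power_mono[OF Pf_le Pf_nonneg])
  have hh: "(h\<^sup>2)\<^sup>2 = h^4" by (subst power_mult[symmetric]) simp
  have P: "(Pf h y)\<^sup>2 \<le> h^4" using P0 hh by simp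
  have a1: "0 \<le> 24 * Pf h y * (y \<bullet> e)\<^sup>2" using Pf_nonneg[of h y] by simp
  have a2: "0 \<le> 6 * (Pf h y)\<^sup>2" by simp
  have "\<bar>d2phi h y e\<bar> \<le> 24 * Pf h y * (y \<bullet> e)\<^sup>2 + 6 * (Pf h y)\<^sup>2"
    using a1 a2 ee unfolding d2phi_def by (simp add: abs_le_iff)
  also have "\<dots> \<le> 24 * h\<^sup>2 * h\<^sup>2 + 6 * h^4"
    using Pf_le[of h y] Pf_nonneg[of h y] ye2 P by (intro add_mono mult_mono) auto
  finally show ?thesis by (simp add: power2_eq_square power4_eq_xxxx)
qed


lemma One_inner: "i \<in> Basis \<Longrightarrow> (One::'a::euclidean_space) \<bullet> i = 1"
  by (simp add: inner_sum_left inner_Basis)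

lemma grad_inner:
  fixes f :: "'a::euclidean_space \<Rightarrow> real"
  assumes "(f has_derivative f') (at x)"
  shows "f' v = grad f x \<bullet> v"
proof -
  have fd: "frechet_derivative f (at x) = f'" using frechet_derivative_at[OF assms] by simp
  have lin: "linear f'" using has_derivative_linear[OF assms] .
  have "f' v = f' (\<Sum>i\<in>Basis. (v \<bullet> i) *\<^sub>R i)" by (simp add: euclidean_representation)
  also have "\<dots> = (\<Sum>i\<in>Basis. (v \<bullet> i) * f' i)"
    using lin by (simp add: linear_sum linear.scaleR)
  also have "\<dots> = (\<Sum>i\<in>Basis. f' i * (i \<bullet> v))" by (rule sum.cong) (auto simp: inner_commute)
  also have "\<dots> = grad f x \<bullet> v" by (simp add: grad_def fd inner_sum_left)
  finally show ?thesis .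
qed

lemma grad_has_derivative:
  fixes f :: "'a::euclidean_space \<Rightarrow> real"
  assumes "(f has_derivative f') (at x)"
  shows "(f has_derivative (\<lambda>v. grad f x \<bullet> v)) (at x)"
proof -
  have "f' = (\<lambda>v. grad f x \<bullet> v)" using grad_inner[OF assms] by auto
  then show ?thesis using assms by simp
qed

lemma C1_grad:
  fixes g :: "'a::euclidean_space \<Rightarrow> real"
  assumes "C1_on g UNIV"
  shows "\<And>x. (g has_derivative (\<lambda>v. grad g x \<bullet> v)) (at x)" and "continuous_on UNIV (grad g)"
proof -
  fix x
  have "g differentiable (at x)" using assms by (simp add: C1_on_def)
  then show "(g has_derivative (\<lambda>v. grad g x \<bullet> v)) (at x)"
    using grad_has_derivative frechet_derivative_works by blast
next
  have "continuous_on UNIV (\<lambda>x. frechet_derivative g (at x) i)" for i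
    using assms by (simp add: C1_on_def)
  then show "continuous_on UNIV (grad g)"
    unfolding grad_def[abs_def] by (intro continuous_intros) auto
qed

lemma int_pos:
  fixes f :: "'a::euclidean_space \<Rightarrow> real"
  assumes h: "h > 0" and cont: "continuous_on (cbox (-(h *\<^sub>R One)) (h *\<^sub>R One)) f"
    and nn: "\<forall>y \<in> cbox (-(h *\<^sub>R One)) (h *\<^sub>R One). f y \<ge> 0" and f0: "f 0 > 0"
  shows "integral (cbox (-(h *\<^sub>R One)) (h *\<^sub>R One)) f > 0"
proof -
  define S0 :: "'a set" where "S0 = cbox (-(h *\<^sub>R One)) (h *\<^sub>R One)"
  have "0 \<in> interior (cbox (-(h *\<^sub>R One)) (h *\<^sub>R One) :: 'a set)" using h by (simp add: mem_box One_inner)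
  from continuous_on_interior[OF cont this] have "continuous (at 0) f" .
  then obtain r where r: "r > 0" "\<forall>y. dist y 0 < r \<longrightarrow> dist (f y) (f 0) < f 0 / 2"
    unfolding continuous_at_eps_delta using f0 by (meson half_gt_zero)
  define r' where "r' = min r h / (2 * real DIM('a))"
  have r'pos: "r' > 0" using r h by (simp add: r'_def)
  have "(1::nat) \<le> DIM('a)" using DIM_positive[where 'a='a] by (simp add: Suc_le_eq)
  then have D1: "1 \<le> real DIM('a)" by simp
  have r'h: "r' \<le> h"
  proof -
    have "min r h / (2 * real DIM('a)) \<le> min r h / 1"
    proof (rule divide_left_mono)
      show "1 \<le> 2 * real DIM('a)" using D1 by linarith
      show "0 \<le> min r h" using r h by simp
      show "0 < 2 * real DIM('a) * 1" using D1 by linarith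
    qed
    then show ?thesis by (simp add: r'_def)
  qed
  define Sb :: "'a set" where "Sb = cbox (-(r' *\<^sub>R One)) (r' *\<^sub>R One)"
  have sub: "Sb \<subseteq> S0"
  proof
    fix x assume "x \<in> Sb"
    then have "\<forall>i\<in>Basis. - r' \<le> x \<bullet> i \<and> x \<bullet> i \<le> r'" by (simp add: Sb_def mem_box One_inner)
    then have "\<forall>i\<in>Basis. - h \<le> x \<bullet> i \<and> x \<bullet> i \<le> h" using r'h by force
    then show "x \<in> S0" by (simp add: S0_def mem_box One_inner)
  qed
  have big: "f y > f 0 / 2" if y: "y \<in> Sb" for y
  proof -
    have "norm y \<le> (\<Sum>b\<in>Basis. \<bar>y \<bullet> b\<bar>)" by (rule norm_le_l1)
    also have "\<dots> \<le> (\<Sum>b\<in>(Basis::'a set). r')"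
      using y by (intro sum_mono) (auto simp: Sb_def mem_box One_inner abs_le_iff)
    also have "\<dots> = real DIM('a) * r'" by simp
    also have "\<dots> = min r h / 2" using DIM_positive[where 'a='a] by (simp add: r'_def)
    also have "\<dots> < r" using r h by simp
    finally have "dist y 0 < r" by simp
    then have "dist (f y) (f 0) < f 0 / 2" using r by blast
    then have "\<bar>f y - f 0\<bar> < f 0 / 2" by (simp add: dist_real_def)
    then show ?thesis by linarith
  qed
  have intS0: "f integrable_on S0" using cont by (simp add: S0_def integrable_continuous)
  have intSb: "f integrable_on Sb" using continuous_on_subset[OF cont sub[unfolded S0_def]]
    by (simp add: Sb_def integrable_continuous)
  have cSb: "Henstock_Kurzweil_Integration.content Sb > 0" unfolding Sb_def
    by (rule content_pos_lt) (use r'pos in \<open>simp add: One_inner\<close>)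
  have "0 < Henstock_Kurzweil_Integration.content Sb * (f 0 / 2)" using cSb f0 by simp
  also have "\<dots> = integral Sb (\<lambda>_. f 0 / 2)" by (simp add: Sb_def)
  also have "\<dots> \<le> integral Sb f"
    using big intSb by (intro integral_le) (auto simp: Sb_def less_imp_le)
  also have "\<dots> \<le> integral S0 f"
    using sub intSb intS0 nn by (intro integral_subset_le) (auto simp: S0_def)
  finally show ?thesis by (simp add: S0_def)
qed


lemma cont_phi: "continuous_on S f \<Longrightarrow> continuous_on S (\<lambda>p. phi h (f p))"
  unfolding phi_def by (intro continuous_intros cont_Pf)
lemma cont_dphi: "continuous_on S f \<Longrightarrow> continuous_on S (\<lambda>p. dphi h (f p) v)"
  unfolding dphi_def by (intro continuous_intros cont_Pf)
lemma cont_d2phi: "continuous_on S f \<Longrightarrow> continuous_on S (\<lambda>p. d2phi h (f p) v)"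
  unfolding d2phi_def by (intro continuous_intros cont_Pf)

lemma phi_zero_out:
  assumes h: "h \<ge> 0" and y: "y \<notin> cbox (-(h *\<^sub>R One)) (h *\<^sub>R One)"
  shows "phi h y = 0"
proof -
  from y obtain i where i: "i \<in> Basis" "\<not> (- h \<le> y \<bullet> i \<and> y \<bullet> i \<le> h)"
    by (auto simp: mem_box One_inner)
  then have "\<bar>y \<bullet> i\<bar> > h" by auto
  moreover have "\<bar>y \<bullet> i\<bar> \<le> norm y" using Basis_le_norm[OF i(1)] by simp
  ultimately have "norm y \<ge> h" by simp
  then show ?thesis using Pf_zero[OF h] by (simp add: phi_def)
qed

lemma conv_eq:
  fixes g :: "'a::euclidean_space \<Rightarrow> real"
  assumes gc: "continuous_on UNIV g" and h: "h > 0"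
    and c: "\<forall>i\<in>Basis. \<bar>x \<bullet> i\<bar> + h \<le> c"
  shows "integral (cbox (-(c *\<^sub>R One)) (c *\<^sub>R One)) (\<lambda>z. g z * phi h (x - z))
       = integral (cbox (-(h *\<^sub>R One)) (h *\<^sub>R One)) (\<lambda>y. g (x - y) * phi h y)"
proof -
  define a0 :: 'a where "a0 = -(c *\<^sub>R One)"
  define b0 :: 'a where "b0 = c *\<^sub>R One"
  define S0 :: "'a set" where "S0 = cbox (-(h *\<^sub>R One)) (h *\<^sub>R One)"
  have ci: "continuous_on UNIV (\<lambda>z. g z * phi h (x - z))"
    by (intro continuous_intros cont_phi gc)
  have I1: "((\<lambda>z. g z * phi h (x - z)) has_integral
      integral (cbox a0 b0) (\<lambda>z. g z * phi h (x - z))) (cbox a0 b0)"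
    by (rule integrable_integral, rule integrable_continuous, rule continuous_on_subset[OF ci]) auto
  then have I2: "((\<lambda>z. g (- z) * phi h (x + z)) has_integral
      integral (cbox a0 b0) (\<lambda>z. g z * phi h (x - z))) (cbox (-b0) (-a0))"
    using has_integral_reflect[of "\<lambda>z. g z * phi h (x - z)"] by simp
  have I3: "((\<lambda>y. (\<lambda>z. g (- z) * phi h (x + z)) (1 *\<^sub>R y + - x)) has_integral
      (integral (cbox a0 b0) (\<lambda>z. g z * phi h (x - z))) /\<^sub>R 1 ^ DIM('a))
      (cbox ((-b0 - - x) /\<^sub>R 1) ((-a0 - - x) /\<^sub>R 1))"
    by (rule has_integral_affinity'[OF I2]) simp
  then have I4: "((\<lambda>y. g (x - y) * phi h y) has_integral
      integral (cbox a0 b0) (\<lambda>z. g z * phi h (x - z))) (cbox (-b0 + x) (-a0 + x))"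
    by (simp add: algebra_simps)
  have ci2: "continuous_on UNIV (\<lambda>y. g (x - y) * phi h y)"
    by (intro continuous_intros cont_phi continuous_on_compose2[OF gc]) auto
  have J: "((\<lambda>y. g (x - y) * phi h y) has_integral integral S0 (\<lambda>y. g (x - y) * phi h y)) S0"
    by (rule integrable_integral) (auto simp: S0_def intro!: integrable_continuous continuous_on_subset[OF ci2])
  have sub: "S0 \<subseteq> cbox (-b0 + x) (-a0 + x)"
  proof
    fix y assume "y \<in> S0"
    then have y: "\<forall>i\<in>Basis. - h \<le> y \<bullet> i \<and> y \<bullet> i \<le> h" by (simp add: S0_def mem_box One_inner)
    show "y \<in> cbox (-b0 + x) (-a0 + x)"
      unfolding mem_box
    proof
      fix i :: 'a assume i: "i \<in> Basis"
      have "\<bar>x \<bullet> i\<bar> + h \<le> c" using c i by blast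
      moreover have "(-b0 + x) \<bullet> i = x \<bullet> i - c" "(-a0 + x) \<bullet> i = x \<bullet> i + c"
        using i by (simp_all add: a0_def b0_def inner_add_left inner_diff_left One_inner)
      moreover have "- h \<le> y \<bullet> i" "y \<bullet> i \<le> h" using y i by auto
      ultimately show "(-b0 + x) \<bullet> i \<le> y \<bullet> i \<and> y \<bullet> i \<le> (-a0 + x) \<bullet> i"
        by (auto simp: abs_le_iff)
    qed
  qed
  have "((\<lambda>y. g (x - y) * phi h y) has_integral integral S0 (\<lambda>y. g (x - y) * phi h y)) (cbox (-b0 + x) (-a0 + x))"
  proof (rule has_integral_on_superset[OF J _ sub])
    fix y assume "y \<notin> S0"
    then have "phi h y = 0" using phi_zero_out[of h y] h by (simp add: S0_def)
    then show "g (x - y) * phi h y = 0" by simp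
  qed
  from has_integral_unique[OF I4 this] show ?thesis by (simp add: a0_def b0_def S0_def)
qed


lemma barrier:
  fixes g :: "'a::euclidean_space \<Rightarrow> real" and F :: "'a set"
  assumes gC1: "C1_on g UNIV" and Fc: "compact F" and Fn: "\<forall>b\<in>F. grad g b \<noteq> 0"
  shows "\<exists>k kd kdd C1 C2. continuous_on UNIV k \<and>
     (\<forall>x v. ((\<lambda>s. k (x + s *\<^sub>R v)) has_real_derivative kd x v) (at 0)) \<and>
     (\<forall>x. \<forall>e\<in>Basis. ((\<lambda>s. kd (x + s *\<^sub>R e) e) has_real_derivative kdd x e) (at 0)) \<and>
     (\<forall>x. \<forall>e\<in>Basis. \<bar>kd x e\<bar> \<le> C1 \<and> \<bar>kdd x e\<bar> \<le> C2) \<and>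
     (\<forall>x\<in>F. kd x (- grad g x) < 0)"
proof -
  define G where "G = grad g"
  have gder: "\<And>x. (g has_derivative (\<lambda>v. G x \<bullet> v)) (at x)" using C1_grad(1)[OF gC1] by (simp add: G_def)
  have Gcont: "continuous_on UNIV G" using C1_grad(2)[OF gC1] by (simp add: G_def)
  have gcont: "continuous_on UNIV g"
    using gder has_derivative_continuous continuous_at_imp_continuous_on by blast
  obtain R where R: "R \<ge> 0" "\<forall>b\<in>F. norm b \<le> R"
  proof -
    obtain a where "\<forall>b\<in>F. norm b \<le> a" using compact_imp_bounded[OF Fc] by (auto simp: bounded_iff)
    then show ?thesis using that[of "max a 0"] by force
  qed
  obtain h where h: "h > 0" "\<forall>b\<in>F. \<forall>y. norm y \<le> h \<longrightarrow> G (b - y) \<bullet> G b > 0"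
  proof (cases "F = {}")
    case True then show ?thesis using that[of 1] by auto
  next
    case False
    have cn: "continuous_on F (\<lambda>b. norm (G b))"
      by (intro continuous_intros continuous_on_subset[OF Gcont]) auto
    obtain bm where bm: "bm \<in> F" "\<forall>b\<in>F. norm (G bm) \<le> norm (G b)"
      using continuous_attains_inf[OF Fc False cn] by blast
    define m where "m = norm (G bm)"
    have m: "m > 0" using Fn bm by (simp add: m_def G_def)
    have uc: "uniformly_continuous_on (cball 0 (R+1)) G"
      by (rule compact_uniformly_continuous[OF continuous_on_subset[OF Gcont]]) auto
    then obtain d where d: "d > 0" "\<forall>x\<in>cball 0 (R+1). \<forall>x'\<in>cball 0 (R+1). dist x' x < d \<longrightarrow> dist (G x') (G x) < m"
      unfolding uniformly_continuous_on_def using m by blast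
    define h where "h = min (d/2) 1"
    show ?thesis
    proof (rule that[of h])
      show "h > 0" using d by (simp add: h_def)
      show "\<forall>b\<in>F. \<forall>y. norm y \<le> h \<longrightarrow> G (b - y) \<bullet> G b > 0"
      proof (intro ballI allI impI)
        fix b y :: 'a assume b: "b \<in> F" and y: "norm y \<le> h"
        have hb: "h \<le> 1" "h < d" using d by (auto simp: h_def)
        have bc: "b \<in> cball 0 (R+1)" using R b by auto
        have "norm (b - y) \<le> norm b + norm y" by (rule norm_triangle_ineq4)
        then have byc: "b - y \<in> cball 0 (R+1)" using R b y hb by auto
        have "dist (b - y) b < d" using y hb by (simp add: dist_norm)
        then have "dist (G (b - y)) (G b) < m" using d bc byc by blast
        then have dG: "norm (G (b - y) - G b) < m" by (simp add: dist_norm)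
        have mG: "m \<le> norm (G b)" using bm b by (simp add: m_def)
        have cs: "\<bar>(G (b - y) - G b) \<bullet> G b\<bar> \<le> norm (G (b - y) - G b) * norm (G b)"
          by (rule Cauchy_Schwarz_ineq2)
        have eq: "G (b - y) \<bullet> G b = norm (G b) * norm (G b) + (G (b - y) - G b) \<bullet> G b"
          by (simp add: inner_diff_left power2_norm_eq_inner[symmetric] power2_eq_square)
        have "norm (G (b - y) - G b) * norm (G b) < norm (G b) * norm (G b)"
          using dG mG m by (intro mult_strict_right_mono) auto
        then show "G (b - y) \<bullet> G b > 0" using eq cs by linarith
      qed
    qed
  qed
  define c where "c = R + h + 2"
  define Bx :: "'a set" where "Bx = cbox (-(c *\<^sub>R One)) (c *\<^sub>R One)"
  define S0 :: "'a set" where "S0 = cbox (-(h *\<^sub>R One)) (h *\<^sub>R One)"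
  have "\<exists>Mg. \<forall>z\<in>Bx. \<bar>g z\<bar> \<le> Mg"
    using compact_imp_bounded[OF compact_continuous_image[OF continuous_on_subset[OF gcont] compact_cbox]]
    by (auto simp: bounded_iff Bx_def)
  then obtain Mg where Mg: "\<forall>z\<in>Bx. \<bar>g z\<bar> \<le> Mg" by blast
  define k where "k = (\<lambda>x. integral Bx (\<lambda>z. g z * phi h (x - z)))"
  define kd where "kd = (\<lambda>x v. integral Bx (\<lambda>z. g z * dphi h (x - z) v))"
  define kdd where "kdd = (\<lambda>x v. integral Bx (\<lambda>z. g z * d2phi h (x - z) v))"
  have kcont: "continuous_on UNIV k"
    unfolding k_def Bx_def
    by (rule integral_continuous_on_param)
      (auto intro!: continuous_intros cont_phi continuous_on_compose2[OF gcont] simp: split_beta)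
  have kder: "\<forall>x v. ((\<lambda>s. k (x + s *\<^sub>R v)) has_real_derivative kd x v) (at 0)"
  proof (intro allI)
    fix x v
    have "((\<lambda>s. integral Bx (\<lambda>z. g z * phi h ((x - z) + s *\<^sub>R v))) has_field_derivative
        integral Bx (\<lambda>z. g z * dphi h ((x - z) + 0 *\<^sub>R v) v)) (at 0 within UNIV)"
      unfolding Bx_def
    proof (rule leibniz_rule_field_derivative)
      show "((\<lambda>s. g z * phi h ((x - z) + s *\<^sub>R v)) has_field_derivative g z * dphi h ((x - z) + s *\<^sub>R v) v) (at s within UNIV)" for s z
        by (rule DERIV_cmult[OF phi_line])
      show "(\<lambda>z. g z * phi h ((x - z) + s *\<^sub>R v)) integrable_on cbox (-(c *\<^sub>R One)) (c *\<^sub>R One)" for s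
        by (intro integrable_continuous continuous_intros cont_phi continuous_on_subset[OF gcont]) auto
      show "continuous_on (UNIV \<times> cbox (-(c *\<^sub>R One)) (c *\<^sub>R One)) (\<lambda>(s, z). g z * dphi h ((x - z) + s *\<^sub>R v) v)"
        by (auto intro!: continuous_intros cont_dphi continuous_on_compose2[OF gcont] simp: split_beta)
    qed auto
    moreover have "(\<lambda>s. k (x + s *\<^sub>R v)) = (\<lambda>s. integral Bx (\<lambda>z. g z * phi h ((x - z) + s *\<^sub>R v)))"
      by (simp add: k_def algebra_simps)
    ultimately show "((\<lambda>s. k (x + s *\<^sub>R v)) has_real_derivative kd x v) (at 0)"
      by (simp add: kd_def)
  qed
  have kdder: "\<forall>x. \<forall>e\<in>Basis. ((\<lambda>s. kd (x + s *\<^sub>R e) e) has_real_derivative kdd x e) (at 0)"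
  proof (intro allI ballI)
    fix x and v :: 'a
    have "((\<lambda>s. integral Bx (\<lambda>z. g z * dphi h ((x - z) + s *\<^sub>R v) v)) has_field_derivative
        integral Bx (\<lambda>z. g z * d2phi h ((x - z) + 0 *\<^sub>R v) v)) (at 0 within UNIV)"
      unfolding Bx_def
    proof (rule leibniz_rule_field_derivative)
      show "((\<lambda>s. g z * dphi h ((x - z) + s *\<^sub>R v) v) has_field_derivative g z * d2phi h ((x - z) + s *\<^sub>R v) v) (at s within UNIV)" for s z
        by (rule DERIV_cmult[OF dphi_line])
      show "(\<lambda>z. g z * dphi h ((x - z) + s *\<^sub>R v) v) integrable_on cbox (-(c *\<^sub>R One)) (c *\<^sub>R One)" for s
        by (intro integrable_continuous continuous_intros cont_dphi continuous_on_subset[OF gcont]) auto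
      show "continuous_on (UNIV \<times> cbox (-(c *\<^sub>R One)) (c *\<^sub>R One)) (\<lambda>(s, z). g z * d2phi h ((x - z) + s *\<^sub>R v) v)"
        by (auto intro!: continuous_intros cont_d2phi continuous_on_compose2[OF gcont] simp: split_beta)
    qed auto
    moreover have "(\<lambda>s. kd (x + s *\<^sub>R v) v) = (\<lambda>s. integral Bx (\<lambda>z. g z * dphi h ((x - z) + s *\<^sub>R v) v))"
      by (simp add: kd_def algebra_simps)
    ultimately show "((\<lambda>s. kd (x + s *\<^sub>R v) v) has_real_derivative kdd x v) (at 0)"
      by (simp add: kdd_def)
  qed
  define C1 where "C1 = \<bar>Mg\<bar> * (6 * h^5) * Henstock_Kurzweil_Integration.content Bx"
  define C2 where "C2 = \<bar>Mg\<bar> * (30 * h^4) * Henstock_Kurzweil_Integration.content Bx"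
  have kbd: "\<forall>x. \<forall>e\<in>Basis. \<bar>kd x e\<bar> \<le> C1 \<and> \<bar>kdd x e\<bar> \<le> C2"
  proof (intro allI ballI conjI)
    fix x and e :: 'a assume e: "e \<in> Basis"
    have ne: "norm e = 1" using e by simp
    have gb: "\<bar>g z\<bar> \<le> \<bar>Mg\<bar>" if "z \<in> Bx" for z using Mg that by force
    have i1: "((\<lambda>z. g z * dphi h (x - z) e) has_integral kd x e) Bx"
      unfolding kd_def Bx_def
      by (intro integrable_integral integrable_continuous continuous_intros cont_dphi continuous_on_subset[OF gcont]) auto
    have "norm (kd x e) \<le> \<bar>Mg\<bar> * (6 * h^5) * Henstock_Kurzweil_Integration.content Bx"
      unfolding Bx_def
    proof (rule has_integral_bound[OF _ i1[unfolded Bx_def]])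
      show "0 \<le> \<bar>Mg\<bar> * (6 * h ^ 5)" using h by simp
      fix z :: 'a assume z: "z \<in> cbox (-(c *\<^sub>R One)) (c *\<^sub>R One)"
      have "norm (g z * dphi h (x - z) e) = \<bar>g z\<bar> * \<bar>dphi h (x - z) e\<bar>" by (simp add: abs_mult)
      also have "\<dots> \<le> \<bar>Mg\<bar> * (6 * h^5)"
        using gb[of z] z dphi_bound[of h e "x - z"] h ne by (intro mult_mono) (auto simp: Bx_def)
      finally show "norm (g z * dphi h (x - z) e) \<le> \<bar>Mg\<bar> * (6 * h^5)" .
    qed
    then show "\<bar>kd x e\<bar> \<le> C1" by (simp add: C1_def)
    have i2: "((\<lambda>z. g z * d2phi h (x - z) e) has_integral kdd x e) Bx"
      unfolding kdd_def Bx_def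
      by (intro integrable_integral integrable_continuous continuous_intros cont_d2phi continuous_on_subset[OF gcont]) auto
    have "norm (kdd x e) \<le> \<bar>Mg\<bar> * (30 * h^4) * Henstock_Kurzweil_Integration.content Bx"
      unfolding Bx_def
    proof (rule has_integral_bound[OF _ i2[unfolded Bx_def]])
      show "0 \<le> \<bar>Mg\<bar> * (30 * h ^ 4)" using h by simp
      fix z :: 'a assume z: "z \<in> cbox (-(c *\<^sub>R One)) (c *\<^sub>R One)"
      have "norm (g z * d2phi h (x - z) e) = \<bar>g z\<bar> * \<bar>d2phi h (x - z) e\<bar>" by (simp add: abs_mult)
      also have "\<dots> \<le> \<bar>Mg\<bar> * (30 * h^4)"
        using gb[of z] z d2phi_bound[of h e "x - z"] h ne by (intro mult_mono) (auto simp: Bx_def)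
      finally show "norm (g z * d2phi h (x - z) e) \<le> \<bar>Mg\<bar> * (30 * h^4)" .
    qed
    then show "\<bar>kdd x e\<bar> \<le> C2" by (simp add: C2_def)
  qed
  have kbc: "\<forall>b\<in>F. kd b (- grad g b) < 0"
  proof
    fix b assume b: "b \<in> F"
    define w where "w = - G b"
    have eqk: "k x = integral S0 (\<lambda>y. g (x - y) * phi h y)" if x: "norm x < R + 1" for x
    proof -
      have "\<forall>i\<in>Basis. \<bar>x \<bullet> i\<bar> + h \<le> c"
      proof
        fix i :: 'a assume "i \<in> Basis"
        then have "\<bar>x \<bullet> i\<bar> \<le> norm x" by (rule Basis_le_norm)
        then show "\<bar>x \<bullet> i\<bar> + h \<le> c" using x by (simp add: c_def)
      qed
      from conv_eq[OF gcont h(1) this] show ?thesis by (simp add: k_def Bx_def S0_def)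
    qed
    have L: "((\<lambda>s. integral S0 (\<lambda>y. g ((b - y) + s *\<^sub>R w) * phi h y)) has_field_derivative
        integral S0 (\<lambda>y. (G ((b - y) + 0 *\<^sub>R w) \<bullet> w) * phi h y)) (at 0 within UNIV)"
      unfolding S0_def
    proof (rule leibniz_rule_field_derivative)
      show "((\<lambda>s. g ((b - y) + s *\<^sub>R w) * phi h y) has_field_derivative (G ((b - y) + s *\<^sub>R w) \<bullet> w) * phi h y) (at s within UNIV)" for s y
        by (rule DERIV_cmult_right[OF line_deriv[OF gder]])
      show "(\<lambda>y. g ((b - y) + s *\<^sub>R w) * phi h y) integrable_on cbox (-(h *\<^sub>R One)) (h *\<^sub>R One)" for s
        by (intro integrable_continuous continuous_intros cont_phi continuous_on_compose2[OF gcont]) auto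
      show "continuous_on (UNIV \<times> cbox (-(h *\<^sub>R One)) (h *\<^sub>R One)) (\<lambda>(s, y). (G ((b - y) + s *\<^sub>R w) \<bullet> w) * phi h y)"
        by (auto intro!: continuous_intros cont_phi continuous_on_compose2[OF Gcont] simp: split_beta)
    qed auto
    then have L': "((\<lambda>s. integral S0 (\<lambda>y. g ((b - y) + s *\<^sub>R w) * phi h y)) has_field_derivative
        integral S0 (\<lambda>y. (G (b - y) \<bullet> w) * phi h y)) (at 0)" by simp
    have op: "open {s::real. norm (b + s *\<^sub>R w) < R + 1}"
      by (rule open_Collect_less) (auto intro!: continuous_intros)
    have in0: "(0::real) \<in> {s. norm (b + s *\<^sub>R w) < R + 1}" using R b by auto
    have "((\<lambda>s. k (b + s *\<^sub>R w)) has_field_derivative integral S0 (\<lambda>y. (G (b - y) \<bullet> w) * phi h y)) (at 0)"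
    proof (rule has_field_derivative_transform_within_open[OF L' op in0])
      fix s assume "s \<in> {s. norm (b + s *\<^sub>R w) < R + 1}"
      then have "k (b + s *\<^sub>R w) = integral S0 (\<lambda>y. g ((b + s *\<^sub>R w) - y) * phi h y)" using eqk by simp
      also have "\<dots> = integral S0 (\<lambda>y. g ((b - y) + s *\<^sub>R w) * phi h y)" by (simp add: algebra_simps)
      finally show "integral S0 (\<lambda>y. g ((b - y) + s *\<^sub>R w) * phi h y) = k (b + s *\<^sub>R w)" by simp
    qed
    with kder have kdeq: "kd b w = integral S0 (\<lambda>y. (G (b - y) \<bullet> w) * phi h y)"
      using DERIV_unique by blast
    define f where "f = (\<lambda>y. (G (b - y) \<bullet> G b) * phi h y)"
    have "integral S0 f > 0" unfolding S0_def
    proof (rule int_pos[OF h(1)])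
      show "continuous_on (cbox (-(h *\<^sub>R One)) (h *\<^sub>R One)) f"
        unfolding f_def by (auto intro!: continuous_intros cont_phi continuous_on_compose2[OF Gcont])
      show "\<forall>y\<in>cbox (- (h *\<^sub>R One)) (h *\<^sub>R One). 0 \<le> f y"
      proof
        fix y :: 'a
        show "0 \<le> f y"
        proof (cases "norm y \<le> h")
          case True then show ?thesis using h b phi_nonneg[of h y] by (simp add: f_def less_imp_le)
        next
          case False then have "Pf h y = 0" using Pf_zero[of h y] h by simp
          then show ?thesis by (simp add: f_def phi_def)
        qed
      qed
      have n0: "norm (0::'a) \<le> h" using h by simp
      have "G (b - 0) \<bullet> G b > 0" using h(2) b n0 by blast
      then have "G b \<bullet> G b > 0" by simp
      moreover have "phi h 0 > 0" using h by (simp add: phi_def Pf_def)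
      ultimately have "0 < (G b \<bullet> G b) * phi h 0" by (rule mult_pos_pos)
      then show "0 < f 0" unfolding f_def by simp
    qed
    moreover have "kd b (- grad g b) = - integral S0 f"
      using kdeq by (simp add: w_def G_def f_def)
    ultimately show "kd b (- grad g b) < 0" by simp
  qed
  show ?thesis using kcont kder kdder kbd kbc by blast
qed


lemma grad_eq_of:
  fixes f :: "'a::euclidean_space \<Rightarrow> real"
  assumes "(f has_derivative (\<lambda>v. G \<bullet> v)) (at x)"
  shows "grad f x = G"
proof -
  have "frechet_derivative f (at x) = (\<lambda>v. G \<bullet> v)" using frechet_derivative_at[OF assms] by simp
  then show ?thesis by (simp add: grad_def euclidean_representation)
qed

lemma divg_cong_open:
  assumes "open S" "x \<in> S" "\<forall>y\<in>S. F y = F' y"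
  shows "divg F x = divg F' x"
proof -
  have "(F has_derivative f') (at x) \<longleftrightarrow> (F' has_derivative f') (at x)" for f'
    using has_derivative_transform_within_open[of F f' x UNIV S F']
      has_derivative_transform_within_open[of F' f' x UNIV S F] assms by auto
  then have "frechet_derivative F (at x) = frechet_derivative F' (at x)"
    by (simp add: frechet_derivative_def)
  then show ?thesis by (simp add: divg_def)
qed

lemma divg_has:
  assumes "(F has_derivative F') (at x)"
  shows "divg F x = (\<Sum>i\<in>Basis. F' i \<bullet> i)"
  using frechet_derivative_at[OF assms] by (simp add: divg_def)

lemma diff_transform_open:
  assumes "f differentiable (at x)" "open S" "x \<in> S" "\<forall>y\<in>S. f y = g y"
  shows "g differentiable (at x)"
proof -
  obtain f' where "(f has_derivative f') (at x)" using assms(1) by (auto simp: differentiable_def)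
  then have "(g has_derivative f') (at x)"
    using has_derivative_transform_within_open[of f f' x UNIV S g] assms by auto
  then show ?thesis by (auto simp: differentiable_def)
qed

lemma slice_has:
  fixes H :: "'a::real_normed_vector \<times> real \<Rightarrow> 'b::real_normed_vector"
  assumes "H differentiable (at (x,t))"
  shows "((\<lambda>y. H (y,t)) has_derivative (\<lambda>v. frechet_derivative H (at (x,t)) (v,0))) (at x)"
proof -
  have "((\<lambda>y. (y,t)) has_derivative (\<lambda>v. (v,0))) (at x)"
    by (auto intro!: derivative_eq_intros)
  from has_derivative_compose[OF this frechet_derivative_works[THEN iffD1, OF assms]] show ?thesis by simp
qed

lemma C1_slice_diff:
  fixes H :: "'a::real_normed_vector \<times> real \<Rightarrow> 'b::real_normed_vector"
  shows "C1_on H (S \<times> {0<..}) \<Longrightarrow> x \<in> S \<Longrightarrow> t > 0 \<Longrightarrow> (\<lambda>y. H (y,t)) differentiable (at x)"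
  using slice_has[of H x t] by (auto simp: C1_on_def differentiable_def)

lemma C1_slice_cont:
  fixes H :: "'a::real_normed_vector \<times> real \<Rightarrow> 'b::real_normed_vector"
  shows "C1_on H (S \<times> {0<..}) \<Longrightarrow> x \<in> S \<Longrightarrow> t > 0 \<Longrightarrow> isCont (\<lambda>y. H (y,t)) x"
  using C1_slice_diff differentiable_imp_continuous_within by blast

lemma C1_slice_grad:
  fixes f :: "'a::euclidean_space \<Rightarrow> real \<Rightarrow> real"
  shows "C1_on (unc f) (S \<times> {0<..}) \<Longrightarrow> x \<in> S \<Longrightarrow> t > 0 \<Longrightarrow>
    ((\<lambda>y. f y t) has_derivative (\<lambda>v. grad (\<lambda>y. f y t) x \<bullet> v)) (at x)"
  using C1_slice_diff[of "unc f" S x t] grad_has_derivative frechet_derivative_works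
  by (fastforce simp: unc_def)

lemma closure_eq_lim:
  fixes f g :: "'a::metric_space \<Rightarrow> 'b::t2_space"
  assumes "isCont f x" "isCont g x" "x \<in> closure S" "\<forall>y\<in>S. f y = g y"
  shows "f x = g x"
proof -
  obtain X where X: "\<forall>n. X n \<in> S" "X \<longlonglongrightarrow> x" using assms(3) closure_sequential by blast
  have "(\<lambda>n. f (X n)) \<longlonglongrightarrow> f x" using isCont_tendsto_compose[OF assms(1) X(2)] .
  moreover have "(\<lambda>n. g (X n)) \<longlonglongrightarrow> g x" using isCont_tendsto_compose[OF assms(2) X(2)] .
  moreover have "(\<lambda>n. f (X n)) = (\<lambda>n. g (X n))" using X assms(4) by auto
  ultimately show ?thesis using LIMSEQ_unique by metis
qed

lemma closure_ge_lim:
  fixes f :: "'a::metric_space \<Rightarrow> real"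
  assumes "isCont f x" "x \<in> closure S" "\<forall>y\<in>S. a \<le> f y"
  shows "a \<le> f x"
proof -
  obtain X where X: "\<forall>n. X n \<in> S" "X \<longlonglongrightarrow> x" using assms(2) closure_sequential by blast
  have "(\<lambda>n. f (X n)) \<longlonglongrightarrow> f x" using isCont_tendsto_compose[OF assms(1) X(2)] .
  then show ?thesis by (rule LIMSEQ_le_const) (use X assms(3) in auto)
qed

lemma final_u:
  fixes \<Omega> :: "'a::euclidean_space set" and u \<alpha> :: "'a \<Rightarrow> real \<Rightarrow> real"
    and Gu :: "'a \<Rightarrow> real \<Rightarrow> 'a" and \<alpha>d :: "'a \<Rightarrow> real \<Rightarrow> 'a \<Rightarrow> real"
    and k :: "'a \<Rightarrow> real" and kd kdd :: "'a \<Rightarrow> 'a \<Rightarrow> real" and G :: "'a \<Rightarrow> 'a"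
  assumes op: "open \<Omega>" and bd: "bounded \<Omega>"
    and ucont: "continuous_on (closure \<Omega> \<times> {0..}) (unc u)"
    and uder: "\<forall>x\<in>closure \<Omega>. \<forall>t>0. ((\<lambda>y. u y t) has_derivative (\<lambda>v. Gu x t \<bullet> v)) (at x)"
    and upde: "\<forall>x\<in>\<Omega>. \<forall>t>0. (\<lambda>y. \<alpha> y t *\<^sub>R Gu y t) differentiable (at x) \<and>
        ((\<lambda>s. u x s) has_real_derivative divg (\<lambda>y. \<alpha> y t *\<^sub>R Gu y t) x) (at t)"
    and ubc: "\<forall>x\<in>frontier \<Omega>. \<forall>t>0. Gu x t \<bullet> G x = 0"
    and gfront: "\<forall>x\<in>frontier \<Omega>. \<exists>d>0. \<forall>s. 0 < s \<and> s < d \<longrightarrow> x - s *\<^sub>R G x \<in> \<Omega>"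
    and \<alpha>pos: "\<forall>x\<in>\<Omega>. \<forall>t>0. 0 < \<alpha> x t" and \<alpha>le: "\<forall>x\<in>\<Omega>. \<forall>t>0. \<alpha> x t \<le> B"
    and \<alpha>der: "\<forall>x\<in>\<Omega>. \<forall>t>0. \<forall>e\<in>Basis. ((\<lambda>s. \<alpha> (x + s *\<^sub>R e) t) has_real_derivative \<alpha>d x t e) (at 0)"
    and \<alpha>dbd: "\<forall>\<tau> T. 0 < \<tau> \<longrightarrow> \<tau> \<le> T \<longrightarrow> (\<exists>Ma. \<forall>x\<in>\<Omega>. \<forall>t\<in>{\<tau>..T}. \<forall>e\<in>Basis. \<bar>\<alpha>d x t e\<bar> \<le> Ma)"
    and kcont: "continuous_on UNIV k"
    and kder: "\<forall>x v. ((\<lambda>s. k (x + s *\<^sub>R v)) has_real_derivative kd x v) (at 0)"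
    and kdder: "\<forall>x. \<forall>e\<in>Basis. ((\<lambda>s. kd (x + s *\<^sub>R e) e) has_real_derivative kdd x e) (at 0)"
    and kbd: "\<forall>x. \<forall>e\<in>Basis. \<bar>kd x e\<bar> \<le> C1 \<and> \<bar>kdd x e\<bar> \<le> C2"
    and kbc: "\<forall>x\<in>frontier \<Omega>. kd x (- G x) < 0"
    and u0: "\<forall>x\<in>\<Omega>. u x 0 = 0"
  shows "\<forall>x\<in>\<Omega>. \<forall>t>0. u x t \<le> 0"
proof (intro ballI allI impI)
  fix x t assume x: "x \<in> \<Omega>" and t: "(t::real) > 0"
  show "u x t \<le> 0"
  proof (rule field_le_epsilon)
    fix \<delta> :: real assume \<delta>: "\<delta> > 0"
    define K where "K = closure \<Omega> \<times> {0..t}"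
    have cK: "compact K" using bd by (simp add: K_def compact_Times compact_closure)
    have "K \<subseteq> closure \<Omega> \<times> {0..}" by (auto simp: K_def)
    from continuous_on_subset[OF ucont this] have "continuous_on K (unc u)" .
    then have "uniformly_continuous_on K (unc u)" using compact_uniformly_continuous cK by blast
    then obtain d where d: "d > 0" "\<forall>z\<in>K. \<forall>z'\<in>K. dist z' z < d \<longrightarrow> dist (unc u z') (unc u z) < \<delta>"
      unfolding uniformly_continuous_on_def using \<delta> by blast
    define \<tau> where "\<tau> = min t (d/2)"
    have tau: "0 < \<tau>" "\<tau> \<le> t" "\<tau> \<le> d/2" using t d by (auto simp: \<tau>_def)
    have init: "\<forall>y\<in>closure \<Omega>. u y \<tau> \<le> \<delta>"
    proof
      fix y assume y: "y \<in> closure \<Omega>"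
      obtain y' where y': "y' \<in> \<Omega>" "dist y' y < d/2" using y d closure_approachable[of y \<Omega>]
        by (meson half_gt_zero)
      have "dist (y', 0::real) (y, \<tau>) = sqrt ((dist y' y)\<^sup>2 + (dist 0 \<tau>)\<^sup>2)" by (rule dist_Pair_Pair)
      also have "\<dots> \<le> \<bar>dist y' y\<bar> + \<bar>dist 0 \<tau>\<bar>" by (rule sqrt_sum_squares_le_sum_abs)
      also have "\<dots> < d" using y' tau by (simp add: dist_real_def)
      finally have dd: "dist (y', 0::real) (y, \<tau>) < d" .
      have inK: "(y, \<tau>) \<in> K" "(y', 0) \<in> K" using y y' tau closure_subset by (auto simp: K_def)
      have "dist (unc u (y', 0)) (unc u (y, \<tau>)) < \<delta>" using d(2) inK dd by blast
      then have "\<bar>u y' 0 - u y \<tau>\<bar> < \<delta>" by (simp add: unc_def dist_real_def)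
      then show "u y \<tau> \<le> \<delta>" using u0 y' by auto
    qed
    obtain Ma where Ma: "\<forall>x\<in>\<Omega>. \<forall>t'\<in>{\<tau>..t}. \<forall>e\<in>Basis. \<bar>\<alpha>d x t' e\<bar> \<le> Ma"
      using \<alpha>dbd tau by blast
    have "\<forall>x\<in>closure \<Omega>. \<forall>t'\<in>{\<tau>..t}. u x t' \<le> \<delta>"
      by (rule core[OF op bd ucont uder upde ubc gfront \<alpha>pos \<alpha>le \<alpha>der Ma kcont kder kdder kbd kbc tau(1,2) init])
    moreover have "x \<in> closure \<Omega>" using x closure_subset by blast
    moreover have "t \<in> {\<tau>..t}" using tau by simp
    ultimately show "u x t \<le> 0 + \<delta>" by simp
  qed
qed


theorem theorem1:
  fixes \<Omega> :: "'a::euclidean_space set"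
    and g :: "'a \<Rightarrow> real"
    and p0 :: "'a \<Rightarrow> real"
    and \<sigma> \<alpha> p pr :: "'a \<Rightarrow> real \<Rightarrow> real"
    and v vr :: "'a \<Rightarrow> real \<Rightarrow> 'a"
  assumes dom: "open \<Omega>" "bounded \<Omega>" "connected \<Omega>" "C1_domain \<Omega> g"
    and p0_density: "\<forall>x\<in>\<Omega>. 0 \<le> p0 x" "p0 integrable_on \<Omega>" "integral \<Omega> p0 = 1"
    and \<alpha>_inf: "\<exists>a>0. \<forall>x\<in>\<Omega>. \<forall>t\<ge>0. a \<le> \<alpha> x t"
    and \<alpha>_sup: "\<exists>b. \<forall>x\<in>\<Omega>. \<forall>t\<ge>0. \<alpha> x t \<le> b"
    \<comment> \<open>classical regularity: C^{2,1} on closure(Omega) x (0,oo), continuous up to t = 0\<close>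
    and reg_p: "C1_on (unc p) (closure \<Omega> \<times> {0<..})"
               "C1_on (\<lambda>z. grad (\<lambda>y. p y (snd z)) (fst z)) (closure \<Omega> \<times> {0<..})"
               "continuous_on (closure \<Omega> \<times> {0..}) (unc p)"
    and reg_pr: "C1_on (unc pr) (closure \<Omega> \<times> {0<..})"
               "C1_on (\<lambda>z. grad (\<lambda>y. pr y (snd z)) (fst z)) (closure \<Omega> \<times> {0<..})"
               "continuous_on (closure \<Omega> \<times> {0..}) (unc pr)"
    and reg_\<sigma>: "C1_on (unc \<sigma>) (closure \<Omega> \<times> {0<..})"
               "C1_on (\<lambda>z. grad (\<lambda>y. \<sigma> y (snd z)) (fst z)) (closure \<Omega> \<times> {0<..})"
    and reg_\<alpha>: "C1_on (unc \<alpha>) (closure \<Omega> \<times> {0<..})"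
    and reg_v: "C1_on (unc v) (closure \<Omega> \<times> {0<..})"
    and reg_vr: "C1_on (unc vr) (closure \<Omega> \<times> {0<..})"
    \<comment> \<open>reference pair (p_r, v_r)\<close>
    and ref_pde: "\<forall>x\<in>\<Omega>. \<forall>t>0. ((\<lambda>s. pr x s) has_real_derivative
                    - divg (\<lambda>y. pr y t *\<^sub>R vr y t) x) (at t)"
    and ref_init: "\<forall>x\<in>\<Omega>. pr x 0 = p0 x"
    and ref_bc: "\<forall>x\<in>frontier \<Omega>. \<forall>t>0. (pr x t *\<^sub>R vr x t) \<bullet> unit_normal g x = 0"
    \<comment> \<open>Fokker--Planck system\<close>
    and fp_pde: "\<forall>x\<in>\<Omega>. \<forall>t>0. ((\<lambda>s. p x s) has_real_derivative
                    - divg (\<lambda>y. p y t *\<^sub>R v y t) x + lap (\<lambda>y. \<sigma> y t * p y t) x) (at t)"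
    and fp_init: "\<forall>x\<in>\<Omega>. p x 0 = p0 x"
    and fp_bc: "\<forall>x\<in>frontier \<Omega>. \<forall>t>0.
                  unit_normal g x \<bullet> (grad (\<lambda>y. \<sigma> y t * p y t) x - p x t *\<^sub>R v x t) = 0"
    \<comment> \<open>feedback law\<close>
    and feedback: "\<forall>x\<in>\<Omega>. \<forall>t>0. v x t =
                  - ((\<alpha> x t *\<^sub>R grad (\<lambda>y. p y t - pr y t) x - grad (\<lambda>y. \<sigma> y t * p y t) x
                      - pr x t *\<^sub>R vr x t) /\<^sub>R p x t)"
    and pos: "\<forall>x\<in>\<Omega>. \<forall>t>0. p x t > 0"
  shows "\<exists>C r. r > 0 \<and> (\<forall>t\<ge>0. L2norm \<Omega> (\<lambda>x. p x t - pr x t) \<le> C * exp (- r * t))"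
proof -
  obtain a where a: "a > 0" "\<forall>x\<in>\<Omega>. \<forall>t\<ge>0. a \<le> \<alpha> x t" using \<alpha>_inf by blast
  obtain B where B: "\<forall>x\<in>\<Omega>. \<forall>t\<ge>0. \<alpha> x t \<le> B" using \<alpha>_sup by blast
  have gC1: "C1_on g UNIV" and \<Omega>g: "\<Omega> = {x. g x < 0}" and gn: "\<forall>x. g x = 0 \<longrightarrow> grad g x \<noteq> 0"
    using dom(4) by (auto simp: C1_domain_def)
  have gder: "\<And>x. (g has_derivative (\<lambda>v. grad g x \<bullet> v)) (at x)" using C1_grad(1)[OF gC1] .
  have gcont: "continuous_on UNIV g"
    using gder has_derivative_continuous continuous_at_imp_continuous_on by blast
  have front: "x \<in> closure \<Omega> \<and> x \<notin> \<Omega>" if "x \<in> frontier \<Omega>" for x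
    using dom(1) that by (auto simp: frontier_def interior_open)
  have clg: "closure \<Omega> \<subseteq> {x. g x \<le> 0}"
    by (rule closure_minimal) (auto simp: \<Omega>g intro!: closed_Collect_le gcont continuous_on_const)
  have front_g: "g x = 0" if "x \<in> frontier \<Omega>" for x
  proof -
    have "g x \<le> 0" using front[OF that] clg by auto
    moreover have "\<not> g x < 0" using front[OF that] \<Omega>g by auto
    ultimately show ?thesis by simp
  qed
  have Fc: "compact (frontier \<Omega>)"
  proof -
    have "bounded (closure \<Omega>)" using dom(2) by (rule bounded_closure)
    moreover have "frontier \<Omega> \<subseteq> closure \<Omega>" by (auto simp: frontier_def)
    ultimately have "bounded (frontier \<Omega>)" using bounded_subset by blast
    then show ?thesis by (simp add: compact_eq_bounded_closed frontier_closed)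
  qed
  have Fn: "\<forall>b\<in>frontier \<Omega>. grad g b \<noteq> 0" using front_g gn by blast
  obtain k kd kdd C1 C2 where kcont: "continuous_on UNIV k"
    and kder: "\<forall>x v. ((\<lambda>s. k (x + s *\<^sub>R v)) has_real_derivative kd x v) (at 0)"
    and kdder: "\<forall>x. \<forall>e\<in>Basis. ((\<lambda>s. kd (x + s *\<^sub>R e) e) has_real_derivative kdd x e) (at 0)"
    and kbd: "\<forall>x. \<forall>e\<in>Basis. \<bar>kd x e\<bar> \<le> C1 \<and> \<bar>kdd x e\<bar> \<le> C2"
    and kbc: "\<forall>x\<in>frontier \<Omega>. kd x (- grad g x) < 0"
    using barrier[OF gC1 Fc Fn] by blast
  have gfront: "\<forall>x\<in>frontier \<Omega>. \<exists>d>0. \<forall>s. 0 < s \<and> s < d \<longrightarrow> x - s *\<^sub>R grad g x \<in> \<Omega>"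
  proof
    fix x assume x: "x \<in> frontier \<Omega>"
    have "((\<lambda>s. g (x + s *\<^sub>R (- grad g x))) has_real_derivative grad g x \<bullet> (- grad g x)) (at 0)"
      using line_deriv0[OF gder] .
    moreover have "grad g x \<bullet> (- grad g x) < 0" using Fn x by simp
    ultimately obtain d where d: "d > 0"
      and dd: "\<forall>h>0. h < d \<longrightarrow> g (x + 0 *\<^sub>R (- grad g x)) > g (x + (0 + h) *\<^sub>R (- grad g x))"
      using DERIV_neg_dec_right by blast
    show "\<exists>d>0. \<forall>s. 0 < s \<and> s < d \<longrightarrow> x - s *\<^sub>R grad g x \<in> \<Omega>"
    proof (intro exI[of _ d] conjI allI impI)
      show "d > 0" by (rule d)
      fix s assume s: "0 < s \<and> s < d"
      then have "g (x - s *\<^sub>R grad g x) < g x" using dd by auto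
      then show "x - s *\<^sub>R grad g x \<in> \<Omega>" using front_g[OF x] \<Omega>g by auto
    qed
  qed
  have sl_p: "((\<lambda>y. p y t) has_derivative (\<lambda>v. grad (\<lambda>y. p y t) x \<bullet> v)) (at x)"
    if "x \<in> closure \<Omega>" "t > 0" for x t using C1_slice_grad[OF reg_p(1)] that by blast
  have sl_pr: "((\<lambda>y. pr y t) has_derivative (\<lambda>v. grad (\<lambda>y. pr y t) x \<bullet> v)) (at x)"
    if "x \<in> closure \<Omega>" "t > 0" for x t using C1_slice_grad[OF reg_pr(1)] that by blast
  have sl_\<sigma>: "((\<lambda>y. \<sigma> y t) has_derivative (\<lambda>v. grad (\<lambda>y. \<sigma> y t) x \<bullet> v)) (at x)"
    if "x \<in> closure \<Omega>" "t > 0" for x t using C1_slice_grad[OF reg_\<sigma>(1)] that by blast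
  have d_Gp: "(\<lambda>y. grad (\<lambda>y. p y t) y) differentiable (at x)"
    if "x \<in> closure \<Omega>" "t > 0" for x t using C1_slice_diff[OF reg_p(2)] that by fastforce
  have d_Gpr: "(\<lambda>y. grad (\<lambda>y. pr y t) y) differentiable (at x)"
    if "x \<in> closure \<Omega>" "t > 0" for x t using C1_slice_diff[OF reg_pr(2)] that by fastforce
  have d_G\<sigma>: "(\<lambda>y. grad (\<lambda>y. \<sigma> y t) y) differentiable (at x)"
    if "x \<in> closure \<Omega>" "t > 0" for x t using C1_slice_diff[OF reg_\<sigma>(2)] that by fastforce
  have d_p: "(\<lambda>y. p y t) differentiable (at x)" if "x \<in> closure \<Omega>" "t > 0" for x t
    using C1_slice_diff[OF reg_p(1)] that by (fastforce simp: unc_def)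
  have d_pr: "(\<lambda>y. pr y t) differentiable (at x)" if "x \<in> closure \<Omega>" "t > 0" for x t
    using C1_slice_diff[OF reg_pr(1)] that by (fastforce simp: unc_def)
  have d_\<sigma>: "(\<lambda>y. \<sigma> y t) differentiable (at x)" if "x \<in> closure \<Omega>" "t > 0" for x t
    using C1_slice_diff[OF reg_\<sigma>(1)] that by (fastforce simp: unc_def)
  have d_\<alpha>: "(\<lambda>y. \<alpha> y t) differentiable (at x)" if "x \<in> closure \<Omega>" "t > 0" for x t
    using C1_slice_diff[OF reg_\<alpha>] that by (fastforce simp: unc_def)
  have d_v: "(\<lambda>y. v y t) differentiable (at x)" if "x \<in> closure \<Omega>" "t > 0" for x t
    using C1_slice_diff[OF reg_v] that by (fastforce simp: unc_def)
  have d_vr: "(\<lambda>y. vr y t) differentiable (at x)" if "x \<in> closure \<Omega>" "t > 0" for x t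
    using C1_slice_diff[OF reg_vr] that by (fastforce simp: unc_def)
  define Gu where "Gu = (\<lambda>y t. grad (\<lambda>y. p y t - pr y t) y)"
  have Gu_eq: "Gu y t = grad (\<lambda>y. p y t) y - grad (\<lambda>y. pr y t) y" if "y \<in> closure \<Omega>" "t > 0" for y t
  proof -
    have "((\<lambda>y'. p y' t - pr y' t) has_derivative (\<lambda>v. (grad (\<lambda>y. p y t) y - grad (\<lambda>y. pr y t) y) \<bullet> v)) (at y)"
      using has_derivative_diff[OF sl_p[OF that] sl_pr[OF that]] by (simp add: inner_diff_left)
    from grad_eq_of[OF this] show ?thesis by (simp add: Gu_def)
  qed
  have S_eq: "grad (\<lambda>y. \<sigma> y t * p y t) y = \<sigma> y t *\<^sub>R grad (\<lambda>y. p y t) y + p y t *\<^sub>R grad (\<lambda>y. \<sigma> y t) y"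
    if "y \<in> closure \<Omega>" "t > 0" for y t
  proof -
    have "((\<lambda>y'. \<sigma> y' t * p y' t) has_derivative
        (\<lambda>h. \<sigma> y t * (grad (\<lambda>y. p y t) y \<bullet> h) + (grad (\<lambda>y. \<sigma> y t) y \<bullet> h) * p y t)) (at y)"
      by (rule has_derivative_mult[OF sl_\<sigma>[OF that] sl_p[OF that]])
    moreover have "(\<lambda>h. \<sigma> y t * (grad (\<lambda>y. p y t) y \<bullet> h) + (grad (\<lambda>y. \<sigma> y t) y \<bullet> h) * p y t)
        = (\<lambda>h. (\<sigma> y t *\<^sub>R grad (\<lambda>y. p y t) y + p y t *\<^sub>R grad (\<lambda>y. \<sigma> y t) y) \<bullet> h)"
      by (auto simp: inner_add_left algebra_simps)
    ultimately show ?thesis using grad_eq_of by metis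
  qed
  have uder: "\<forall>x\<in>closure \<Omega>. \<forall>t>0. ((\<lambda>y. p y t - pr y t) has_derivative (\<lambda>v. Gu x t \<bullet> v)) (at x)"
    using has_derivative_diff[OF sl_p sl_pr] Gu_eq by (simp add: inner_diff_left)
  have upde: "\<forall>x\<in>\<Omega>. \<forall>t>0. (\<lambda>y. \<alpha> y t *\<^sub>R Gu y t) differentiable (at x) \<and>
        ((\<lambda>s. p x s - pr x s) has_real_derivative divg (\<lambda>y. \<alpha> y t *\<^sub>R Gu y t) x) (at t)"
  proof (intro ballI allI impI)
    fix x and t :: real assume x: "x \<in> \<Omega>" and t: "t > 0"
    have xc: "x \<in> closure \<Omega>" using x closure_subset by blast
    have yc: "y \<in> closure \<Omega>" if "y \<in> \<Omega>" for y using that closure_subset by blast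
    define A where "A = (\<lambda>y. \<alpha> y t *\<^sub>R Gu y t)"
    define S where "S = (\<lambda>y. grad (\<lambda>y. \<sigma> y t * p y t) y)"
    define R where "R = (\<lambda>y. pr y t *\<^sub>R vr y t)"
    define FP where "FP = (\<lambda>y. p y t *\<^sub>R v y t)"
    have dA: "A differentiable (at x)"
    proof (rule diff_transform_open[OF _ dom(1) x])
      show "(\<lambda>y. \<alpha> y t *\<^sub>R (grad (\<lambda>y. p y t) y - grad (\<lambda>y. pr y t) y)) differentiable (at x)"
        using d_\<alpha>[OF xc t] d_Gp[OF xc t] d_Gpr[OF xc t]
        by (intro differentiable_scaleR differentiable_diff) auto
      show "\<forall>y\<in>\<Omega>. \<alpha> y t *\<^sub>R (grad (\<lambda>y. p y t) y - grad (\<lambda>y. pr y t) y) = A y"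
        using Gu_eq[OF yc t] by (simp add: A_def)
    qed
    have dS: "S differentiable (at x)"
    proof (rule diff_transform_open[OF _ dom(1) x])
      show "(\<lambda>y. \<sigma> y t *\<^sub>R grad (\<lambda>y. p y t) y + p y t *\<^sub>R grad (\<lambda>y. \<sigma> y t) y) differentiable (at x)"
        using d_\<sigma>[OF xc t] d_Gp[OF xc t] d_p[OF xc t] d_G\<sigma>[OF xc t]
        by (intro differentiable_scaleR differentiable_add) auto
      show "\<forall>y\<in>\<Omega>. \<sigma> y t *\<^sub>R grad (\<lambda>y. p y t) y + p y t *\<^sub>R grad (\<lambda>y. \<sigma> y t) y = S y"
        using S_eq[OF yc t] by (simp add: S_def)
    qed
    have dR: "R differentiable (at x)"
      unfolding R_def using d_pr[OF xc t] d_vr[OF xc t] by (intro differentiable_scaleR) auto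
    have FPQ: "\<forall>y\<in>\<Omega>. FP y = - (A y - S y - R y)"
    proof
      fix y assume y: "y \<in> \<Omega>"
      have py: "p y t > 0" using pos y t by blast
      have "v y t = - ((A y - S y - R y) /\<^sub>R p y t)"
        using feedback y t by (simp add: A_def S_def R_def Gu_def)
      then show "FP y = - (A y - S y - R y)" using py by (simp add: FP_def)
    qed
    have e1: "divg FP x = divg (\<lambda>y. - (A y - S y - R y)) x"
      using divg_cong_open[OF dom(1) x FPQ] .
    obtain A' where A': "(A has_derivative A') (at x)" using dA by (auto simp: differentiable_def)
    obtain S' where S': "(S has_derivative S') (at x)" using dS by (auto simp: differentiable_def)
    obtain R' where R': "(R has_derivative R') (at x)" using dR by (auto simp: differentiable_def)
    have "((\<lambda>y. - (A y - S y - R y)) has_derivative (\<lambda>h. - (A' h - S' h - R' h))) (at x)"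
      by (intro has_derivative_minus has_derivative_diff A' S' R')
    from divg_has[OF this]
    have "divg (\<lambda>y. - (A y - S y - R y)) x = (\<Sum>i\<in>Basis. - (A' i - S' i - R' i) \<bullet> i)" .
    also have "\<dots> = - ((\<Sum>i\<in>Basis. A' i \<bullet> i) - (\<Sum>i\<in>Basis. S' i \<bullet> i) - (\<Sum>i\<in>Basis. R' i \<bullet> i))"
      by (simp add: inner_diff_left sum_subtractf sum_negf)
    finally have e2: "divg (\<lambda>y. - (A y - S y - R y)) x = - (divg A x - divg S x - divg R x)"
      using divg_has[OF A'] divg_has[OF S'] divg_has[OF R'] by simp
    have e3: "lap (\<lambda>y. \<sigma> y t * p y t) x = divg S x" by (simp add: lap_def S_def)
    have Dp: "((\<lambda>s. p x s) has_real_derivative divg A x - divg R x) (at t)"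
    proof -
      have "((\<lambda>s. p x s) has_real_derivative - divg FP x + lap (\<lambda>y. \<sigma> y t * p y t) x) (at t)"
        using fp_pde x t by (simp add: FP_def)
      moreover have "- divg FP x + lap (\<lambda>y. \<sigma> y t * p y t) x = divg A x - divg R x"
        using e1 e2 e3 by simp
      ultimately show ?thesis by simp
    qed
    have Dpr: "((\<lambda>s. pr x s) has_real_derivative - divg R x) (at t)"
      using ref_pde x t by (simp add: R_def)
    have "((\<lambda>s. p x s - pr x s) has_real_derivative (divg A x - divg R x) - (- divg R x)) (at t)"
      by (rule DERIV_diff[OF Dp Dpr])
    then have "((\<lambda>s. p x s - pr x s) has_real_derivative divg A x) (at t)" by simp
    then show "(\<lambda>y. \<alpha> y t *\<^sub>R Gu y t) differentiable (at x) \<and>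
        ((\<lambda>s. p x s - pr x s) has_real_derivative divg (\<lambda>y. \<alpha> y t *\<^sub>R Gu y t) x) (at t)"
      using dA by (simp add: A_def)
  qed
  have \<alpha>_cl: "a \<le> \<alpha> x t" if "x \<in> closure \<Omega>" "t > 0" for x t
  proof (rule closure_ge_lim[where f="\<lambda>y. \<alpha> y t"])
    show "isCont (\<lambda>y. \<alpha> y t) x" using d_\<alpha>[OF that] differentiable_imp_continuous_within by blast
    show "x \<in> closure \<Omega>" by (rule that)
    show "\<forall>y\<in>\<Omega>. a \<le> \<alpha> y t" using a that by auto
  qed
  have ubc: "\<forall>x\<in>frontier \<Omega>. \<forall>t>0. Gu x t \<bullet> grad g x = 0"
  proof (intro ballI allI impI)
    fix x and t :: real assume x: "x \<in> frontier \<Omega>" and t: "t > 0"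
    have xc: "x \<in> closure \<Omega>" using front[OF x] by blast
    have yc: "y \<in> closure \<Omega>" if "y \<in> \<Omega>" for y using that closure_subset by blast
    define A where "A = (\<lambda>y. \<alpha> y t *\<^sub>R Gu y t)"
    define S where "S = (\<lambda>y. grad (\<lambda>y. \<sigma> y t * p y t) y)"
    define R where "R = (\<lambda>y. pr y t *\<^sub>R vr y t)"
    define FP where "FP = (\<lambda>y. p y t *\<^sub>R v y t)"
    define Qt where "Qt = (\<lambda>y. - (\<alpha> y t *\<^sub>R (grad (\<lambda>y. p y t) y - grad (\<lambda>y. pr y t) y)
        - (\<sigma> y t *\<^sub>R grad (\<lambda>y. p y t) y + p y t *\<^sub>R grad (\<lambda>y. \<sigma> y t) y) - pr y t *\<^sub>R vr y t))"
    have ic: "isCont f x" if "f differentiable (at x)" for f :: "'a \<Rightarrow> 'b::real_normed_vector"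
      using differentiable_imp_continuous_within that by blast
    have cQt: "isCont Qt x" unfolding Qt_def
      using ic[OF d_\<alpha>[OF xc t]] ic[OF d_Gp[OF xc t]] ic[OF d_Gpr[OF xc t]] ic[OF d_\<sigma>[OF xc t]]
        ic[OF d_p[OF xc t]] ic[OF d_G\<sigma>[OF xc t]] ic[OF d_pr[OF xc t]] ic[OF d_vr[OF xc t]]
      by (intro continuous_intros) auto
    have cFP: "isCont FP x" unfolding FP_def
      using ic[OF d_p[OF xc t]] ic[OF d_v[OF xc t]] by (intro continuous_intros) auto
    have QtQ: "Qt y = - (A y - S y - R y)" if "y \<in> closure \<Omega>" for y
      using Gu_eq[OF that t] S_eq[OF that t] by (simp add: Qt_def A_def S_def R_def)
    have FPQ: "\<forall>y\<in>\<Omega>. FP y = Qt y"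
    proof
      fix y assume y: "y \<in> \<Omega>"
      have py: "p y t > 0" using pos y t by blast
      have "v y t = - ((A y - S y - R y) /\<^sub>R p y t)"
        using feedback y t by (simp add: A_def S_def R_def Gu_def)
      then show "FP y = Qt y" using py QtQ[OF yc[OF y]] by (simp add: FP_def)
    qed
    have "FP x = Qt x" by (rule closure_eq_lim[OF cFP cQt xc FPQ])
    then have FPx: "FP x = - (A x - S x - R x)" using QtQ[OF xc] by simp
    have "unit_normal g x \<bullet> (S x - FP x) = 0" using fp_bc x t by (simp add: S_def FP_def)
    then have "unit_normal g x \<bullet> (A x - R x) = 0" using FPx by (simp add: algebra_simps)
    moreover have "R x \<bullet> unit_normal g x = 0" using ref_bc x t by (simp add: R_def)
    ultimately have "unit_normal g x \<bullet> A x = 0" by (simp add: inner_diff_right inner_commute)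
    then have "(\<alpha> x t / norm (grad g x)) * (grad g x \<bullet> Gu x t) = 0"
      by (auto simp: unit_normal_def A_def inner_commute)
    moreover have "\<alpha> x t > 0" using \<alpha>_cl[OF xc t] a by simp
    moreover have "norm (grad g x) > 0" using Fn x by simp
    ultimately show "Gu x t \<bullet> grad g x = 0" by (simp add: inner_commute)
  qed
  define \<alpha>d where "\<alpha>d = (\<lambda>x t e. frechet_derivative (unc \<alpha>) (at (x,t)) (e, 0))"
  have \<alpha>pos: "\<forall>x\<in>\<Omega>. \<forall>t>0. 0 < \<alpha> x t"
  proof (intro ballI allI impI)
    fix x and t :: real assume "x \<in> \<Omega>" "t > 0"
    then have "a \<le> \<alpha> x t" using a(2) by auto
    then show "0 < \<alpha> x t" using a(1) by linarith
  qed
  have \<alpha>le: "\<forall>x\<in>\<Omega>. \<forall>t>0. \<alpha> x t \<le> B"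
  proof (intro ballI allI impI)
    fix x and t :: real assume "x \<in> \<Omega>" "t > 0"
    then show "\<alpha> x t \<le> B" using B by auto
  qed
  have \<alpha>der: "\<forall>x\<in>\<Omega>. \<forall>t>0. \<forall>e\<in>Basis. ((\<lambda>s. \<alpha> (x + s *\<^sub>R e) t) has_real_derivative \<alpha>d x t e) (at 0)"
  proof (intro ballI allI impI)
    fix x and t :: real and e :: 'a assume x: "x \<in> \<Omega>" and t: "t > 0"
    have "unc \<alpha> differentiable (at (x,t))" using reg_\<alpha> x t closure_subset by (auto simp: C1_on_def)
    from slice_has[OF this] have "((\<lambda>y. \<alpha> y t) has_derivative (\<lambda>v. \<alpha>d x t v)) (at x)"
      by (simp add: unc_def \<alpha>d_def)
    from line_deriv0[OF this] show "((\<lambda>s. \<alpha> (x + s *\<^sub>R e) t) has_real_derivative \<alpha>d x t e) (at 0)" .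
  qed
  have \<alpha>dbd: "\<forall>\<tau> T. 0 < \<tau> \<longrightarrow> \<tau> \<le> T \<longrightarrow> (\<exists>Ma. \<forall>x\<in>\<Omega>. \<forall>t\<in>{\<tau>..T}. \<forall>e\<in>Basis. \<bar>\<alpha>d x t e\<bar> \<le> Ma)"
  proof (intro allI impI)
    fix \<tau> T :: real assume \<tau>: "0 < \<tau>" "\<tau> \<le> T"
    define KK where "KK = closure \<Omega> \<times> {\<tau>..T}"
    have cKK: "compact KK" using dom(2) by (simp add: KK_def compact_Times compact_closure)
    have sub: "KK \<subseteq> closure \<Omega> \<times> {0<..}" using \<tau> by (auto simp: KK_def)
    have "\<exists>M. \<forall>z\<in>KK. \<bar>frechet_derivative (unc \<alpha>) (at z) (e, 0)\<bar> \<le> M" for e :: 'a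
    proof -
      have "continuous_on (closure \<Omega> \<times> {0<..}) (\<lambda>z. frechet_derivative (unc \<alpha>) (at z) (e, 0))"
        using reg_\<alpha> by (simp add: C1_on_def)
      then have "continuous_on KK (\<lambda>z. frechet_derivative (unc \<alpha>) (at z) (e, 0))"
        using continuous_on_subset sub by blast
      from compact_imp_bounded[OF compact_continuous_image[OF this cKK]]
      show ?thesis by (auto simp: bounded_iff)
    qed
    then obtain Mf where Mf: "\<forall>e. \<forall>z\<in>KK. \<bar>frechet_derivative (unc \<alpha>) (at z) (e, 0)\<bar> \<le> Mf e"
      by metis
    show "\<exists>Ma. \<forall>x\<in>\<Omega>. \<forall>t\<in>{\<tau>..T}. \<forall>e\<in>Basis. \<bar>\<alpha>d x t e\<bar> \<le> Ma"
    proof (intro exI[of _ "\<Sum>e\<in>(Basis::'a set). \<bar>Mf e\<bar>"] ballI)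
      fix x t and e :: 'a assume x: "x \<in> \<Omega>" and t: "t \<in> {\<tau>..T}" and e: "e \<in> Basis"
      have "(x,t) \<in> KK" using x t closure_subset by (auto simp: KK_def)
      then have "\<bar>\<alpha>d x t e\<bar> \<le> Mf e" using Mf by (simp add: \<alpha>d_def)
      also have "\<dots> \<le> \<bar>Mf e\<bar>" by simp
      also have "\<dots> \<le> (\<Sum>e\<in>(Basis::'a set). \<bar>Mf e\<bar>)"
        by (rule member_le_sum) (use e in auto)
      finally show "\<bar>\<alpha>d x t e\<bar> \<le> (\<Sum>e\<in>(Basis::'a set). \<bar>Mf e\<bar>)" .
    qed
  qed
  have ucont: "continuous_on (closure \<Omega> \<times> {0..}) (unc (\<lambda>x t. p x t - pr x t))"
  proof -
    have "unc (\<lambda>x t. p x t - pr x t) = (\<lambda>z. unc p z - unc pr z)" by (simp add: unc_def fun_eq_iff)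
    then show ?thesis using reg_p(3) reg_pr(3) by (simp add: continuous_on_diff)
  qed
  have u0: "\<forall>x\<in>\<Omega>. p x 0 - pr x 0 = 0" using fp_init ref_init by simp
  have le1: "\<forall>x\<in>\<Omega>. \<forall>t>0. p x t - pr x t \<le> 0"
    by (rule final_u[OF dom(1,2) ucont uder upde ubc gfront \<alpha>pos \<alpha>le \<alpha>der \<alpha>dbd kcont kder kdder kbd kbc u0])
  have ucont2: "continuous_on (closure \<Omega> \<times> {0..}) (unc (\<lambda>x t. - (p x t - pr x t)))"
  proof -
    have "unc (\<lambda>x t. - (p x t - pr x t)) = (\<lambda>z. - (unc p z - unc pr z))" by (simp add: unc_def fun_eq_iff)
    then show ?thesis using reg_p(3) reg_pr(3) by (simp add: continuous_on_diff continuous_on_minus)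
  qed
  have uder2: "\<forall>x\<in>closure \<Omega>. \<forall>t>0. ((\<lambda>y. - (p y t - pr y t)) has_derivative (\<lambda>v. (- Gu x t) \<bullet> v)) (at x)"
  proof (intro ballI allI impI)
    fix x and t :: real assume "x \<in> closure \<Omega>" "t > 0"
    then have "((\<lambda>y. p y t - pr y t) has_derivative (\<lambda>v. Gu x t \<bullet> v)) (at x)" using uder by blast
    from has_derivative_minus[OF this]
    show "((\<lambda>y. - (p y t - pr y t)) has_derivative (\<lambda>v. (- Gu x t) \<bullet> v)) (at x)" by simp
  qed
  have upde2: "\<forall>x\<in>\<Omega>. \<forall>t>0. (\<lambda>y. \<alpha> y t *\<^sub>R (- Gu y t)) differentiable (at x) \<and>
        ((\<lambda>s. - (p x s - pr x s)) has_real_derivative divg (\<lambda>y. \<alpha> y t *\<^sub>R (- Gu y t)) x) (at t)"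
  proof (intro ballI allI impI)
    fix x and t :: real assume x: "x \<in> \<Omega>" and t: "t > 0"
    define A where "A = (\<lambda>y. \<alpha> y t *\<^sub>R Gu y t)"
    have dA: "A differentiable (at x)" and DA: "((\<lambda>s. p x s - pr x s) has_real_derivative divg A x) (at t)"
      using upde x t by (auto simp: A_def)
    have eqf: "(\<lambda>y. \<alpha> y t *\<^sub>R (- Gu y t)) = (\<lambda>y. - A y)" by (simp add: A_def fun_eq_iff)
    obtain A' where A': "(A has_derivative A') (at x)" using dA by (auto simp: differentiable_def)
    have "((\<lambda>y. - A y) has_derivative (\<lambda>h. - A' h)) (at x)" by (rule has_derivative_minus[OF A'])
    from divg_has[OF this] have "divg (\<lambda>y. - A y) x = (\<Sum>i\<in>Basis. (- A' i) \<bullet> i)" .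
    then have dv: "divg (\<lambda>y. - A y) x = - divg A x"
      using divg_has[OF A'] by (simp add: sum_negf)
    have "(\<lambda>y. - A y) differentiable (at x)" using dA by (simp add: differentiable_minus)
    moreover have "((\<lambda>s. - (p x s - pr x s)) has_real_derivative - divg A x) (at t)"
      using DERIV_minus[OF DA] .
    ultimately show "(\<lambda>y. \<alpha> y t *\<^sub>R (- Gu y t)) differentiable (at x) \<and>
        ((\<lambda>s. - (p x s - pr x s)) has_real_derivative divg (\<lambda>y. \<alpha> y t *\<^sub>R (- Gu y t)) x) (at t)"
      using eqf dv by simp
  qed
  have ubc2: "\<forall>x\<in>frontier \<Omega>. \<forall>t>0. (- Gu x t) \<bullet> grad g x = 0" using ubc by simp
  have u02: "\<forall>x\<in>\<Omega>. - (p x 0 - pr x 0) = 0" using u0 by simp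
  have le2: "\<forall>x\<in>\<Omega>. \<forall>t>0. - (p x t - pr x t) \<le> 0"
    by (rule final_u[OF dom(1,2) ucont2 uder2 upde2 ubc2 gfront \<alpha>pos \<alpha>le \<alpha>der \<alpha>dbd kcont kder kdder kbd kbc u02])
  have zero: "p x t - pr x t = 0" if "x \<in> \<Omega>" "t \<ge> 0" for x t
  proof (cases "t = 0")
    case True then show ?thesis using u0 that by simp
  next
    case False then have "t > 0" using that by simp
    then show ?thesis using le1 le2 that by force
  qed
  have "L2norm \<Omega> (\<lambda>x. p x t - pr x t) = 0" if "t \<ge> 0" for t
  proof -
    have "integral \<Omega> (\<lambda>x. (p x t - pr x t)\<^sup>2) = integral \<Omega> (\<lambda>x. 0)"
      by (rule integral_cong) (use zero that in simp)
    then show ?thesis by (simp add: L2norm_def)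
  qed
  then show ?thesis by (intro exI[of _ 0] exI[of _ 1]) simp
qed


end
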